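(* Let $n\ge1$, $\kappa>0$, and on $\mathbb{C}^{n+1}\setminus\{0\}$ with coordinates $z_1,\dots,z_{n+1}$ let $s=\sum|z_i|^2$, $F(s)=(1+\kappa/s^{n+1})^{1/(n+1)}$, and $g_{\mu\bar\nu}=F\delta_{\mu\nu}+F'\bar z_\mu z_\nu$. Define the $(0,1)$-form $\beta=\frac{\sum_i z_i\,d\bar z_i}{s^{n+1}F^n}$ and $\tilde\omega=2i\,d\beta$. Then $\bar\partial\beta=0$ and $\sum_{\mu,\nu}g^{\mu\bar\nu}\partial_{z_\mu}\beta_{\bar\nu}=0$, so $\beta$ lies in the kernel of the untwisted Dirac operator $\bar\partial-\bar\partial^*$ of $g$; the closed $2$-form $\tilde\omega$ is square-integrable with respect to $g$, while $\beta$ is not square-integrable. Moreover, with $\omega=2i\,d\big(F\sum_iz_i\,d\bar z_i\big)$ (the Kähler form of $g$) and $\xi=\frac{i}{2}\sum_\nu(z_\nu\partial_{z_\nu}-\bar z_\nu\partial_{\bar z_\nu})$, one has $\omega-\kappa\tilde\omega=2\,d(\xi^\flat)$, where $\xi^\flat$ is the $g$-metric dual of $\xi$.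
   Context: $g^{\mu\bar\nu}$ is the inverse matrix of $g_{\mu\bar\nu}$; $\bar\partial^*$ is the formal $L^2$-adjoint of $\bar\partial$ with respect to $g$, and for this Kähler metric $-\bar\partial^*\beta=\sum g^{\mu\bar\nu}\partial_{z_\mu}\beta_{\bar\nu}$ for $\beta=\sum\beta_{\bar\nu}d\bar z_\nu$. Square-integrability is with respect to the pointwise norm and Riemannian volume of $g$ on $\mathbb{C}^{n+1}\setminus\{0\}$. *)

theory Defs
  imports "HOL-Analysis.Analysis"
begin

text \<open>Coordinates on C^(n+1): vectors z :: complex^'n with CARD('n) = n+1.
  Differential forms are represented by their coefficient functions in the
  coordinate frame dz_mu, dzbar_nu.\<close>

datatype deg1 = D10 | D01   \<comment> \<open>dz-part / dzbar-part (or d/dz / d/dzbar for vectors)\<close>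
datatype deg2 = B20 | B11 | B02

type_synonym 'n form1 = "deg1 \<Rightarrow> 'n \<Rightarrow> complex^'n \<Rightarrow> complex"
type_synonym 'n vfield = "deg1 \<Rightarrow> 'n \<Rightarrow> complex^'n \<Rightarrow> complex"
text \<open>A 2-form T stands for
  (1/2) sum T B20 mu nu dz_mu/\dz_nu + sum T B11 mu nu dz_mu/\dzbar_nu
  + (1/2) sum T B02 mu nu dzbar_mu/\dzbar_nu  (B20, B02 antisymmetric).\<close>
type_synonym 'n form2 = "deg2 \<Rightarrow> 'n \<Rightarrow> 'n \<Rightarrow> complex^'n \<Rightarrow> complex"

definition sq :: "complex^'n::finite \<Rightarrow> real" where
  "sq z = (\<Sum>i\<in>UNIV. (cmod (z$i))^2)"

definition Fpot :: "real \<Rightarrow> nat \<Rightarrow> real \<Rightarrow> real" where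
  "Fpot \<kappa> N s = (1 + \<kappa> / s^N) powr (1 / real N)"

definition metric :: "real \<Rightarrow> complex^'n::finite \<Rightarrow> complex^'n^'n" where
  "metric \<kappa> z = (\<chi> \<mu>. \<chi> \<nu>.
      of_real (Fpot \<kappa> CARD('n) (sq z)) * (if \<mu> = \<nu> then 1 else 0)
    + of_real (deriv (Fpot \<kappa> CARD('n)) (sq z)) * cnj (z$\<mu>) * z$\<nu>)"

text \<open>g^{mu nubar}: the inverse matrix, (g^{-1}) entry at (nubar, mu).\<close>
definition invmetric :: "real \<Rightarrow> complex^'n::finite \<Rightarrow> 'n \<Rightarrow> 'n \<Rightarrow> complex" where
  "invmetric \<kappa> z \<mu> \<nu> = matrix_inv (metric \<kappa> z) $ \<nu> $ \<mu>"

definition dRe :: "'n::finite \<Rightarrow> (complex^'n \<Rightarrow> complex) \<Rightarrow> complex^'n \<Rightarrow> complex" where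
  "dRe \<mu> f z = vector_derivative (\<lambda>t::real. f (z + t *\<^sub>R axis \<mu> 1)) (at 0)"

definition dIm :: "'n::finite \<Rightarrow> (complex^'n \<Rightarrow> complex) \<Rightarrow> complex^'n \<Rightarrow> complex" where
  "dIm \<mu> f z = vector_derivative (\<lambda>t::real. f (z + t *\<^sub>R axis \<mu> \<i>)) (at 0)"

definition dz :: "'n::finite \<Rightarrow> (complex^'n \<Rightarrow> complex) \<Rightarrow> complex^'n \<Rightarrow> complex" where
  "dz \<mu> f z = (dRe \<mu> f z - \<i> * dIm \<mu> f z) / 2"

definition dzb :: "'n::finite \<Rightarrow> (complex^'n \<Rightarrow> complex) \<Rightarrow> complex^'n \<Rightarrow> complex" where
  "dzb \<mu> f z = (dRe \<mu> f z + \<i> * dIm \<mu> f z) / 2"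

definition dbar01 :: "('n::finite \<Rightarrow> complex^'n \<Rightarrow> complex) \<Rightarrow> 'n \<Rightarrow> 'n \<Rightarrow> complex^'n \<Rightarrow> complex" where
  "dbar01 b \<mu> \<nu> z = dzb \<mu> (b \<nu>) z - dzb \<nu> (b \<mu>) z"

definition d1 :: "'n::finite form1 \<Rightarrow> 'n form2" where
  "d1 a = (\<lambda>k \<mu> \<nu> z. case k of
      B20 \<Rightarrow> dz \<mu> (a D10 \<nu>) z - dz \<nu> (a D10 \<mu>) z
    | B11 \<Rightarrow> dz \<mu> (a D01 \<nu>) z - dzb \<nu> (a D10 \<mu>) z
    | B02 \<Rightarrow> dbar01 (a D01) \<mu> \<nu> z)"

text \<open>Metric dual of a complex vector field X = sum X^mu d/dz_mu + X^mubar d/dzbar_mu,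
  using g(d/dz_mu, d/dzbar_nu) = g_{mu nubar}.\<close>
definition flat :: "real \<Rightarrow> 'n::finite vfield \<Rightarrow> 'n form1" where
  "flat \<kappa> X = (\<lambda>k i z. case k of
      D10 \<Rightarrow> (\<Sum>\<nu>\<in>UNIV. metric \<kappa> z $ i $ \<nu> * X D01 \<nu> z)
    | D01 \<Rightarrow> (\<Sum>\<mu>\<in>UNIV. metric \<kappa> z $ \<mu> $ i * X D10 \<mu> z))"

definition xi :: "'n::finite vfield" where
  "xi = (\<lambda>k \<nu> z. case k of D10 \<Rightarrow> (\<i>/2) * z$\<nu> | D01 \<Rightarrow> - (\<i>/2) * cnj (z$\<nu>))"

definition beta :: "real \<Rightarrow> 'n::finite \<Rightarrow> complex^'n \<Rightarrow> complex" where
  "beta \<kappa> \<nu> z = z$\<nu> / of_real (sq z ^ CARD('n) * Fpot \<kappa> CARD('n) (sq z) ^ (CARD('n) - 1))"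

definition omegat :: "real \<Rightarrow> 'n::finite form2" where
  "omegat \<kappa> = (\<lambda>k \<mu> \<nu> z. 2 * \<i> * d1 (\<lambda>j i w. case j of D10 \<Rightarrow> 0 | D01 \<Rightarrow> beta \<kappa> i w) k \<mu> \<nu> z)"

definition omega :: "real \<Rightarrow> 'n::finite form2" where
  "omega \<kappa> = (\<lambda>k \<mu> \<nu> z. 2 * \<i> * d1 (\<lambda>j i w. case j of D10 \<Rightarrow> 0
        | D01 \<Rightarrow> of_real (Fpot \<kappa> CARD('n) (sq w)) * w$i) k \<mu> \<nu> z)"

text \<open>Pointwise squared g-norms (up to positive constant factors).\<close>
definition norm01 :: "real \<Rightarrow> ('n::finite \<Rightarrow> complex^'n \<Rightarrow> complex) \<Rightarrow> complex^'n \<Rightarrow> real" where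
  "norm01 \<kappa> b z = Re (\<Sum>\<mu>\<in>UNIV. \<Sum>\<nu>\<in>UNIV. invmetric \<kappa> z \<mu> \<nu> * cnj (b \<mu> z) * b \<nu> z)"

definition norm2f :: "real \<Rightarrow> 'n::finite form2 \<Rightarrow> complex^'n \<Rightarrow> real" where
  "norm2f \<kappa> T z = Re (\<Sum>\<mu>\<in>UNIV. \<Sum>\<nu>\<in>UNIV. \<Sum>\<alpha>\<in>UNIV. \<Sum>\<rho>\<in>UNIV.
       (1/2) * invmetric \<kappa> z \<mu> \<alpha> * invmetric \<kappa> z \<nu> \<rho> * T B20 \<mu> \<nu> z * cnj (T B20 \<alpha> \<rho> z)
     + invmetric \<kappa> z \<mu> \<alpha> * invmetric \<kappa> z \<rho> \<nu> * T B11 \<mu> \<nu> z * cnj (T B11 \<alpha> \<rho> z)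
     + (1/2) * invmetric \<kappa> z \<alpha> \<mu> * invmetric \<kappa> z \<rho> \<nu> * T B02 \<mu> \<nu> z * cnj (T B02 \<alpha> \<rho> z))"

text \<open>Riemannian volume density of g relative to Lebesgue measure (up to a constant).\<close>
definition vol :: "real \<Rightarrow> complex^'n::finite \<Rightarrow> real" where
  "vol \<kappa> z = Re (det (metric \<kappa> z))"

definition sq_integrable :: "real \<Rightarrow> (complex^'n::finite \<Rightarrow> real) \<Rightarrow> bool" where
  "sq_integrable \<kappa> f = set_integrable lborel (- {0}) (\<lambda>z. f z * vol \<kappa> z)"

end

theory Submission
  imports Defs "HOL-Probability.Sinc_Integral"
begin

lemma Fpot_pos: "s > 0 \<Longrightarrow> \<kappa> > 0 \<Longrightarrow> Fpot \<kappa> N s > 0"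
proof -
  assume "s > 0" "\<kappa> > 0"
  then have "1 + \<kappa>/s^N > 0" by (simp add: add_pos_pos)
  then show ?thesis unfolding Fpot_def by simp
qed

lemma Fpot_pow:
  assumes "s > 0" "\<kappa> > 0" "N > 0"
  shows "Fpot \<kappa> N s ^ N = (s^N + \<kappa>) / s^N"
proof -
  have u: "1 + \<kappa>/s^N > 0" using assms by (simp add: add_pos_pos)
  have "Fpot \<kappa> N s ^ N = ((1 + \<kappa>/s^N) powr (1/real N)) powr (real N)"
    unfolding Fpot_def using u by (simp add: powr_realpow)
  also have "\<dots> = 1 + \<kappa>/s^N" using assms u by (simp add: powr_powr)
  also have "\<dots> = (s^N + \<kappa>) / s^N" using assms by (simp add: field_simps)
  finally show ?thesis .
qed

lemma Fpot_deriv: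
  assumes "s > 0" "\<kappa> > 0" "N > 0"
  shows "(Fpot \<kappa> N has_real_derivative (- \<kappa> * Fpot \<kappa> N s / (s * (s^N + \<kappa>)))) (at s)"
proof -
  have u: "1 + \<kappa>/s^N > 0" using assms by (simp add: add_pos_pos)
  have d: "((\<lambda>x. 1 + \<kappa>/x^N) has_real_derivative (- \<kappa> * (real N * s^(N-1)) / (s^N)^2)) (at s)"
    using assms by (auto intro!: derivative_eq_intros simp: power2_eq_square)
  have "((\<lambda>x. (1 + \<kappa>/x^N) powr (1/real N)) has_real_derivative
      (1/real N) * (1 + \<kappa>/s^N) powr (1/real N - of_nat 1) * (- \<kappa> * (real N * s^(N-1)) / (s^N)^2)) (at s)"
    by (rule DERIV_fun_powr[OF d u])
  moreover have "(1/real N) * (1 + \<kappa>/s^N) powr (1/real N - of_nat 1) * (- \<kappa> * (real N * s^(N-1)) / (s^N)^2)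
      = - \<kappa> * Fpot \<kappa> N s / (s * (s^N + \<kappa>))"
  proof -
    have e: "(1 + \<kappa>/s^N) powr (1/real N - of_nat 1) = Fpot \<kappa> N s / (1 + \<kappa>/s^N)"
      unfolding Fpot_def using u by (simp add: powr_diff)
    have sN: "s^N = s * s^(N-1)" using assms by (cases N) auto
    have N0: "real N > 0" using assms by simp
    have "(1/real N) * (Fpot \<kappa> N s / (1 + \<kappa>/s^N)) * (- \<kappa> * (real N * s^(N-1)) / (s^N)^2)
       = - \<kappa> * Fpot \<kappa> N s * s^(N-1) / ((1 + \<kappa>/s^N) * (s^N)^2)"
      using N0 assms by (simp add: divide_simps)
    also have "(1 + \<kappa>/s^N) * (s^N)^2 = s^N * (s^N + \<kappa>)"
      using assms by (simp add: field_simps power2_eq_square)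
    also have "s^N * (s^N + \<kappa>) = s^(N-1) * (s * (s^N + \<kappa>))" using sN by simp
    finally show ?thesis unfolding e using assms by simp

  qed
  ultimately show ?thesis unfolding Fpot_def[abs_def] by simp
qed

definition hf :: "real \<Rightarrow> nat \<Rightarrow> real \<Rightarrow> real" where
  "hf \<kappa> N s = 1 / (s^N * Fpot \<kappa> N s ^ (N - 1))"

definition Gd :: "real \<Rightarrow> nat \<Rightarrow> real \<Rightarrow> real" where
  "Gd \<kappa> N s = Fpot \<kappa> N s + deriv (Fpot \<kappa> N) s * s"

lemma Fpot_deriv_eq:
  assumes "s > 0" "\<kappa> > 0" "N > 0"
  shows "deriv (Fpot \<kappa> N) s = - \<kappa> * Fpot \<kappa> N s / (s * (s^N + \<kappa>))"
  using DERIV_imp_deriv[OF Fpot_deriv[OF assms]] .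

lemma hf_eq:
  assumes "s > 0" "\<kappa> > 0" "N > 0"
  shows "hf \<kappa> N s = Fpot \<kappa> N s / (s^N + \<kappa>)"
proof -
  have F: "Fpot \<kappa> N s > 0" using Fpot_pos assms by auto
  have "Fpot \<kappa> N s ^ (N - 1) * Fpot \<kappa> N s = Fpot \<kappa> N s ^ N"
    using assms by (cases N) auto
  then have "s^N * Fpot \<kappa> N s ^ (N - 1) * Fpot \<kappa> N s = s^N + \<kappa>"
    using Fpot_pow[OF assms] assms by (simp add: mult.assoc)
  moreover have "s^N + \<kappa> > 0" using assms by (simp add: add_pos_pos)
  ultimately show ?thesis unfolding hf_def using F assms
    by (simp add: field_simps)
qed

lemma hf_deriv:
  assumes "s > 0" "\<kappa> > 0" "N > 0"
  shows "(hf \<kappa> N has_real_derivative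
     (- Fpot \<kappa> N s * (real N * s^N + \<kappa>) / (s * (s^N + \<kappa>)^2))) (at s)"
proof -
  have F: "Fpot \<kappa> N s > 0" using Fpot_pos assms by auto
  have P: "s^N + \<kappa> > 0" using assms by (simp add: add_pos_pos)
  have sN: "s^N = s * s^(N-1)" using assms by (cases N) auto
  have d: "((\<lambda>x. Fpot \<kappa> N x / (x^N + \<kappa>)) has_real_derivative
     ((- \<kappa> * Fpot \<kappa> N s / (s * (s^N + \<kappa>))) * (s^N + \<kappa>) - Fpot \<kappa> N s * (real N * s^(N-1)))
        / (s^N + \<kappa>)^2) (at s)"
    using Fpot_deriv[OF assms] P
    by (auto intro!: derivative_eq_intros simp: power2_eq_square)
  have e: "((- \<kappa> * Fpot \<kappa> N s / (s * (s^N + \<kappa>))) * (s^N + \<kappa>) - Fpot \<kappa> N s * (real N * s^(N-1)))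
        / (s^N + \<kappa>)^2 = - Fpot \<kappa> N s * (real N * s^N + \<kappa>) / (s * (s^N + \<kappa>)^2)"
    using assms P by (simp add: sN divide_simps) (simp add: algebra_simps)
  show ?thesis
    apply (rule has_field_derivative_transform_within_open[where S="{0<..}"])
    using d[unfolded e] apply simp
      apply simp using assms apply simp
    using hf_eq assms by simp
qed

lemma Gd_eq:
  assumes "s > 0" "\<kappa> > 0" "N > 0"
  shows "Gd \<kappa> N s = Fpot \<kappa> N s - \<kappa> * hf \<kappa> N s"
    and "Gd \<kappa> N s = Fpot \<kappa> N s * s^N / (s^N + \<kappa>)"
proof -
  have P: "s^N + \<kappa> > 0" using assms by (simp add: add_pos_pos)
  show "Gd \<kappa> N s = Fpot \<kappa> N s - \<kappa> * hf \<kappa> N s"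
    unfolding Gd_def Fpot_deriv_eq[OF assms] hf_eq[OF assms] using assms P
    by (simp add: divide_simps)
  then show "Gd \<kappa> N s = Fpot \<kappa> N s * s^N / (s^N + \<kappa>)"
    unfolding hf_eq[OF assms] using assms P
    by (simp add: field_simps)
qed

lemma Gd_deriv:
  assumes "s > 0" "\<kappa> > 0" "N > 0"
  shows "(Gd \<kappa> N has_real_derivative
     (- \<kappa> * Fpot \<kappa> N s / (s * (s^N + \<kappa>)) 
      - \<kappa> * (- Fpot \<kappa> N s * (real N * s^N + \<kappa>) / (s * (s^N + \<kappa>)^2)))) (at s)"
proof -
  have d: "((\<lambda>x. Fpot \<kappa> N x - \<kappa> * hf \<kappa> N x) has_real_derivative
     (- \<kappa> * Fpot \<kappa> N s / (s * (s^N + \<kappa>)) 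
      - \<kappa> * (- Fpot \<kappa> N s * (real N * s^N + \<kappa>) / (s * (s^N + \<kappa>)^2)))) (at s)"
    by (rule DERIV_diff[OF Fpot_deriv[OF assms] DERIV_cmult[OF hf_deriv[OF assms]]])
  show ?thesis
    apply (rule has_field_derivative_transform_within_open[where S="{0<..}", OF d])
    using assms Gd_eq(1)[of _ \<kappa> N] by auto
qed

lemma sq_line:
  fixes z :: "complex^'n::finite"
  shows "sq (z + t *\<^sub>R axis \<mu> c) = sq z + 2*t*Re(cnj c * z$\<mu>) + t^2 * (cmod c)^2"
proof -
  have "sq (z + t *\<^sub>R axis \<mu> c) = (\<Sum>j\<in>UNIV. (cmod (z$j))^2 + (if j = \<mu> then 2*t*Re(cnj c * z$\<mu>) + t^2 * (cmod c)^2 else 0))"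
    unfolding sq_def
  proof (rule sum.cong)
    fix j :: 'n
    show "(cmod ((z + t *\<^sub>R axis \<mu> c) $ j))\<^sup>2 =
         (cmod (z $ j))\<^sup>2 + (if j = \<mu> then 2 * t * Re (cnj c * z $ \<mu>) + t\<^sup>2 * (cmod c)\<^sup>2 else 0)"
      by (cases "j = \<mu>") (simp_all only: vector_add_component vector_scaleR_component, simp_all add: axis_def cmod_power2 scaleR_conv_of_real, simp add: power2_eq_square algebra_simps)
  qed simp
  also have "\<dots> = sq z + 2*t*Re(cnj c * z$\<mu>) + t^2 * (cmod c)^2"
    by (simp add: sum.distrib sq_def)
  finally show ?thesis .
qed

lemma line_deriv_lin:
  fixes z :: "complex^'n::finite"
  assumes "(\<phi> has_real_derivative \<phi>') (at (sq z))"
  shows "((\<lambda>t. C * of_real (\<phi> (sq (z + t *\<^sub>R axis \<mu> c))) * (z + t *\<^sub>R axis \<mu> c)$i) has_vector_derivative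
     C * (of_real (\<phi>' * (2 * Re (cnj c * z$\<mu>))) * z$i + of_real (\<phi> (sq z)) * (if i = \<mu> then c else 0))) (at 0)"
proof -
  define q where "q t = sq z + 2*t*Re(cnj c * z$\<mu>) + t^2 * (cmod c)^2" for t
  define d where "d = (if i = \<mu> then c else 0)"
  have fe: "(\<lambda>t. C * of_real (\<phi> (sq (z + t *\<^sub>R axis \<mu> c))) * (z + t *\<^sub>R axis \<mu> c)$i)
      = (\<lambda>t. C * of_real (\<phi> (q t)) * (z$i + of_real t * d))" (is "_ = ?r")
  proof (rule ext)
    fix t
    have 1: "sq (z + t *\<^sub>R axis \<mu> c) = q t" by (simp add: q_def sq_line)
    have 2: "(z + t *\<^sub>R axis \<mu> c)$i = z$i + of_real t * d" by (simp only: vector_add_component vector_scaleR_component, simp add: d_def axis_def scaleR_conv_of_real)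
    show "C * of_real (\<phi> (sq (z + t *\<^sub>R axis \<mu> c))) * ((z + t *\<^sub>R axis \<mu> c)$i) = C * of_real (\<phi> (q t)) * (z$i + of_real t * d)"
      unfolding 1 2 ..
  qed
  have dq: "(q has_real_derivative 2 * Re (cnj c * z$\<mu>)) (at 0)"
    unfolding q_def by (auto intro!: derivative_eq_intros)
  have q0: "q 0 = sq z" by (simp add: q_def)
  have dphi: "((\<lambda>t. \<phi> (q t)) has_real_derivative \<phi>' * (2 * Re (cnj c * z$\<mu>))) (at 0)"
  proof -
    have "(\<phi> has_real_derivative \<phi>') (at (q 0))" using assms q0 by simp
    from DERIV_chain2[OF this dq] show ?thesis .
  qed
  have "((\<lambda>t. C * of_real (\<phi> (q t)) * (z$i + of_real t * d)) has_vector_derivative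
      C * of_real (\<phi> (q 0)) * (0 + 1 * d) + C * of_real (\<phi>' * (2 * Re (cnj c * z$\<mu>))) * (z$i + of_real 0 * d)) (at 0)"
    apply (rule has_vector_derivative_mult)
     apply (rule has_vector_derivative_mult_right)
     apply (rule has_vector_derivative_of_real[OF dphi])
    apply (rule has_vector_derivative_add)
     apply (rule has_vector_derivative_const)
    apply (rule has_vector_derivative_mult_left)
    using has_vector_derivative_of_real[OF DERIV_ident] by simp
  then show ?thesis unfolding fe q0 d_def by (simp add: algebra_simps)
qed

lemma line_deriv_cnj:
  fixes z :: "complex^'n::finite"
  assumes "(\<phi> has_real_derivative \<phi>') (at (sq z))"
  shows "((\<lambda>t. C * of_real (\<phi> (sq (z + t *\<^sub>R axis \<mu> c))) * cnj ((z + t *\<^sub>R axis \<mu> c)$i)) has_vector_derivative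
     C * (of_real (\<phi>' * (2 * Re (cnj c * z$\<mu>))) * cnj (z$i) + of_real (\<phi> (sq z)) * (if i = \<mu> then cnj c else 0))) (at 0)"
proof -
  define q where "q t = sq z + 2*t*Re(cnj c * z$\<mu>) + t^2 * (cmod c)^2" for t
  define d where "d = (if i = \<mu> then cnj c else 0)"
  have fe: "(\<lambda>t. C * of_real (\<phi> (sq (z + t *\<^sub>R axis \<mu> c))) * cnj ((z + t *\<^sub>R axis \<mu> c)$i))
      = (\<lambda>t. C * of_real (\<phi> (q t)) * (cnj (z$i) + of_real t * d))"
  proof (rule ext)
    fix t
    have 1: "sq (z + t *\<^sub>R axis \<mu> c) = q t" by (simp add: q_def sq_line)
    have 2: "cnj ((z + t *\<^sub>R axis \<mu> c)$i) = cnj (z$i) + of_real t * d" by (simp only: vector_add_component vector_scaleR_component, simp add: d_def axis_def scaleR_conv_of_real)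
    show "C * of_real (\<phi> (sq (z + t *\<^sub>R axis \<mu> c))) * cnj ((z + t *\<^sub>R axis \<mu> c)$i) = C * of_real (\<phi> (q t)) * (cnj (z$i) + of_real t * d)"
      unfolding 1 2 ..
  qed
  have dq: "(q has_real_derivative 2 * Re (cnj c * z$\<mu>)) (at 0)"
    unfolding q_def by (auto intro!: derivative_eq_intros)
  have q0: "q 0 = sq z" by (simp add: q_def)
  have dphi: "((\<lambda>t. \<phi> (q t)) has_real_derivative \<phi>' * (2 * Re (cnj c * z$\<mu>))) (at 0)"
  proof -
    have "(\<phi> has_real_derivative \<phi>') (at (q 0))" using assms q0 by simp
    from DERIV_chain2[OF this dq] show ?thesis .
  qed
  have "((\<lambda>t. C * of_real (\<phi> (q t)) * (cnj (z$i) + of_real t * d)) has_vector_derivative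
      C * of_real (\<phi> (q 0)) * (0 + 1 * d) + C * of_real (\<phi>' * (2 * Re (cnj c * z$\<mu>))) * (cnj (z$i) + of_real 0 * d)) (at 0)"
    apply (rule has_vector_derivative_mult)
     apply (rule has_vector_derivative_mult_right)
     apply (rule has_vector_derivative_of_real[OF dphi])
    apply (rule has_vector_derivative_add)
     apply (rule has_vector_derivative_const)
    apply (rule has_vector_derivative_mult_left)
    using has_vector_derivative_of_real[OF DERIV_ident] by simp
  then show ?thesis unfolding fe q0 d_def by (simp add: algebra_simps)
qed

lemma cnj_comb: "of_real (p * (2 * Re w)) * a - \<i> * (of_real (p * (2 * Im w)) * a) = 2 * (of_real p * cnj w * a)"
  by (simp add: complex_eq_iff algebra_simps)
lemma z_comb: "of_real (p * (2 * Re w)) * a + \<i> * (of_real (p * (2 * Im w)) * a) = 2 * (of_real p * w * a)"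
  by (simp add: complex_eq_iff algebra_simps)

lemma wirt_lin:
  fixes z :: "complex^'n::finite"
  assumes "(\<phi> has_real_derivative \<phi>') (at (sq z))"
    and f: "\<And>w. f w = C * of_real (\<phi> (sq w)) * w$i"
  shows "dz \<mu> f z = C * (of_real \<phi>' * cnj (z$\<mu>) * z$i + of_real (\<phi> (sq z)) * (if \<mu> = i then 1 else 0))"
    and "dzb \<mu> f z = C * of_real \<phi>' * z$\<mu> * z$i"
proof -
  have r: "dRe \<mu> f z = C * (of_real (\<phi>' * (2 * Re (z$\<mu>))) * z$i + of_real (\<phi> (sq z)) * (if i = \<mu> then 1 else 0))"
    unfolding dRe_def f using vector_derivative_at[OF line_deriv_lin[OF assms(1), of C \<mu> 1 i]] by simp
  have m: "dIm \<mu> f z = C * (of_real (\<phi>' * (2 * Im (z$\<mu>))) * z$i + of_real (\<phi> (sq z)) * (if i = \<mu> then \<i> else 0))"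
    unfolding dIm_def f using vector_derivative_at[OF line_deriv_lin[OF assms(1), of C \<mu> \<i> i]] by simp
  have "dRe \<mu> f z - \<i> * dIm \<mu> f z = C * ((of_real (\<phi>' * (2 * Re (z$\<mu>))) * z$i - \<i> * (of_real (\<phi>' * (2 * Im (z$\<mu>))) * z$i))
     + of_real (\<phi> (sq z)) * ((if i = \<mu> then 1 else 0) - \<i> * (if i = \<mu> then \<i> else 0)))"
    unfolding r m by (simp add: algebra_simps)
  also have "\<dots> = 2 * (C * (of_real \<phi>' * cnj (z$\<mu>) * z$i + of_real (\<phi> (sq z)) * (if \<mu> = i then 1 else 0)))"
    unfolding cnj_comb by (auto simp: algebra_simps)
  finally show "dz \<mu> f z = C * (of_real \<phi>' * cnj (z$\<mu>) * z$i + of_real (\<phi> (sq z)) * (if \<mu> = i then 1 else 0))"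
    unfolding dz_def by simp
  have "dRe \<mu> f z + \<i> * dIm \<mu> f z = C * ((of_real (\<phi>' * (2 * Re (z$\<mu>))) * z$i + \<i> * (of_real (\<phi>' * (2 * Im (z$\<mu>))) * z$i))
     + of_real (\<phi> (sq z)) * ((if i = \<mu> then 1 else 0) + \<i> * (if i = \<mu> then \<i> else 0)))"
    unfolding r m by (simp add: algebra_simps)
  also have "\<dots> = 2 * (C * of_real \<phi>' * z$\<mu> * z$i)"
    unfolding z_comb by (auto simp: algebra_simps)
  finally show "dzb \<mu> f z = C * of_real \<phi>' * z$\<mu> * z$i"
    unfolding dzb_def by simp
qed

lemma wirt_cnj:
  fixes z :: "complex^'n::finite"
  assumes "(\<phi> has_real_derivative \<phi>') (at (sq z))"
    and f: "\<And>w. f w = C * of_real (\<phi> (sq w)) * cnj (w$i)"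
  shows "dz \<mu> f z = C * of_real \<phi>' * cnj (z$\<mu>) * cnj (z$i)"
    and "dzb \<mu> f z = C * (of_real \<phi>' * z$\<mu> * cnj (z$i) + of_real (\<phi> (sq z)) * (if \<mu> = i then 1 else 0))"
proof -
  have r: "dRe \<mu> f z = C * (of_real (\<phi>' * (2 * Re (z$\<mu>))) * cnj (z$i) + of_real (\<phi> (sq z)) * (if i = \<mu> then 1 else 0))"
    unfolding dRe_def f using vector_derivative_at[OF line_deriv_cnj[OF assms(1), of C \<mu> 1 i]] by simp
  have m: "dIm \<mu> f z = C * (of_real (\<phi>' * (2 * Im (z$\<mu>))) * cnj (z$i) + of_real (\<phi> (sq z)) * (if i = \<mu> then - \<i> else 0))"
    unfolding dIm_def f using vector_derivative_at[OF line_deriv_cnj[OF assms(1), of C \<mu> \<i> i]] by simp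
  have "dRe \<mu> f z - \<i> * dIm \<mu> f z = C * ((of_real (\<phi>' * (2 * Re (z$\<mu>))) * cnj (z$i) - \<i> * (of_real (\<phi>' * (2 * Im (z$\<mu>))) * cnj (z$i)))
     + of_real (\<phi> (sq z)) * ((if i = \<mu> then 1 else 0) - \<i> * (if i = \<mu> then - \<i> else 0)))"
    unfolding r m by (simp add: algebra_simps)
  also have "\<dots> = 2 * (C * of_real \<phi>' * cnj (z$\<mu>) * cnj (z$i))"
    unfolding cnj_comb by (auto simp: algebra_simps)
  finally show "dz \<mu> f z = C * of_real \<phi>' * cnj (z$\<mu>) * cnj (z$i)"
    unfolding dz_def by simp
  have "dRe \<mu> f z + \<i> * dIm \<mu> f z = C * ((of_real (\<phi>' * (2 * Re (z$\<mu>))) * cnj (z$i) + \<i> * (of_real (\<phi>' * (2 * Im (z$\<mu>))) * cnj (z$i)))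
     + of_real (\<phi> (sq z)) * ((if i = \<mu> then 1 else 0) + \<i> * (if i = \<mu> then - \<i> else 0)))"
    unfolding r m by (simp add: algebra_simps)
  also have "\<dots> = 2 * (C * (of_real \<phi>' * z$\<mu> * cnj (z$i) + of_real (\<phi> (sq z)) * (if \<mu> = i then 1 else 0)))"
    unfolding z_comb by (auto simp: algebra_simps)
  finally show "dzb \<mu> f z = C * (of_real \<phi>' * z$\<mu> * cnj (z$i) + of_real (\<phi> (sq z)) * (if \<mu> = i then 1 else 0))"
    unfolding dzb_def by simp
qed

lemma dz_zero: "dz \<mu> (\<lambda>w. 0) z = 0" and dzb_zero: "dzb \<mu> (\<lambda>w. 0) z = 0"
  by (simp_all add: dz_def dzb_def dRe_def dIm_def)

lemma det_rows_add_multiple: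
  fixes A :: "'a::field^'n::finite^'n"
  shows "det (\<chi> i. if i = k then row k A else row i A + a i *s row k A) = det A"
proof -
  have gen: "finite S \<Longrightarrow> det (\<chi> i. if i \<in> S \<and> i \<noteq> k then row i A + a i *s row k A else row i A) = det A" for S :: "'n set"
  proof (induction S rule: finite_induct)
    case empty
    have "(\<chi> i. if i \<in> {} \<and> i \<noteq> k then row i A + a i *s row k A else row i A) = A"
      by (simp add: row_def vec_eq_iff)
    then show ?case by simp
  next
    case (insert x S)
    define B where "B = (\<chi> i. if i \<in> S \<and> i \<noteq> k then row i A + a i *s row k A else row i A)"
    show ?case
    proof (cases "x = k")
      case True
      have "(\<chi> i. if i \<in> insert x S \<and> i \<noteq> k then row i A + a i *s row k A else row i A) = B"
        using True by (auto simp: B_def vec_eq_iff)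
      then show ?thesis using insert.IH B_def by simp
    next
      case False
      have rx: "row x B = row x A" using insert.hyps by (simp add: B_def row_def vec_eq_iff)
      have rk: "row k B = row k A" by (simp add: B_def row_def vec_eq_iff)
      have "(\<chi> i. if i \<in> insert x S \<and> i \<noteq> k then row i A + a i *s row k A else row i A)
          = (\<chi> m. if m = x then row x B + a x *s row k B else row m B)"
        unfolding rx rk using False by (auto simp: B_def row_def vec_eq_iff)
      also have "det \<dots> = det B" by (rule det_row_operation[OF False])
      finally show ?thesis using insert.IH B_def by simp
    qed
  qed
  moreover have "(\<chi> i. if i = k then row k A else row i A + a i *s row k A)
     = (\<chi> i. if i \<in> UNIV \<and> i \<noteq> k then row i A + a i *s row k A else row i A)"
    by (auto simp: vec_eq_iff)
  ultimately show ?thesis using gen[of UNIV] by simp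
qed

lemma det_rank_one:
  fixes u v :: "'n::finite \<Rightarrow> complex"
  assumes c: "c \<noteq> 0"
  shows "det (\<chi> i j. c * (if i = j then 1 else 0) + u i * v j :: complex^'n^'n)
       = c ^ (CARD('n) - 1) * (c + (\<Sum>i\<in>UNIV. u i * v i))"
proof (cases "\<forall>i. u i = 0")
  case True
  have "det (\<chi> i j. c * (if i = j then 1 else 0) + u i * v j :: complex^'n^'n) = (\<Prod>i\<in>(UNIV::'n set). c)"
    using True by (subst det_diagonal) auto
  also have "\<dots> = c ^ CARD('n)" by simp
  also have "\<dots> = c ^ (CARD('n) - 1) * c"
  proof -
    have "CARD('n) = Suc (CARD('n) - 1)" by simp
    then have "c ^ CARD('n) = c ^ Suc (CARD('n) - 1)" by metis
    then show ?thesis by (simp only: power_Suc mult.commute)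
  qed
  finally show ?thesis using True by simp
next
  case False
  then obtain k where uk: "u k \<noteq> 0" by auto
  define D where "D = c + (\<Sum>i\<in>UNIV. u i * v i)"
  define M :: "complex^'n^'n" where "M = (\<chi> i j. c * (if i = j then 1 else 0) + u i * v j)"
  define M1 :: "complex^'n^'n" where "M1 = (\<chi> i j. if i = k then c * (if k = j then 1 else 0) + u k * v j
        else c * (if i = j then 1 else 0) - (u i / u k) * c * (if k = j then 1 else 0))"
  have M1e: "M1 = (\<chi> i. if i = k then row k M else row i M + (- u i / u k) *s row k M)"
    using uk by (auto simp: M1_def M_def row_def vec_eq_iff field_simps)
  have dM1: "det M1 = det M" unfolding M1e by (rule det_rows_add_multiple)
  define x where "x = (\<Sum>i\<in>UNIV-{k}. (- (u k * v i) / c) *s row i M1)"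
  have xspan: "x \<in> vec.span {row j M1 |j. j \<noteq> k}"
    unfolding x_def
    by (intro vec.span_sum vec.span_scale vec.span_base) auto
  define M2 :: "complex^'n^'n" where "M2 = (\<chi> i j. if i = k then D * (if k = j then 1 else 0)
        else c * (if i = j then 1 else 0) - (u i / u k) * c * (if k = j then 1 else 0))"
  have xj: "x $ j = (if j = k then (\<Sum>i\<in>UNIV-{k}. u i * v i) else - (u k * v j))" for j
  proof -
    have "x $ j = (\<Sum>i\<in>UNIV-{k}. (- (u k * v i) / c) * M1 $ i $ j)"
      by (simp add: x_def row_def)
    also have "\<dots> = (\<Sum>i\<in>UNIV-{k}. (- (u k * v i)) * (if i = j then 1 else 0)
          + v i * u i * (if k = j then 1 else 0))"
      using c uk by (intro sum.cong refl) (simp add: M1_def right_diff_distrib)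
    also have "\<dots> = (if j = k then (\<Sum>i\<in>UNIV-{k}. u i * v i) else - (u k * v j))"
    proof (cases "j = k")
      case True
      then show ?thesis by (simp add: mult.commute)
    next
      case False
      have "(\<Sum>i\<in>UNIV-{k}. (- (u k * v i)) * (if i = j then 1 else 0)
          + v i * u i * (if k = j then 1 else 0)) = (\<Sum>i\<in>UNIV-{k}. if i = j then - (u k * v j) else 0)"
        using False by (intro sum.cong) auto
      also have "\<dots> = - (u k * v j)" using False by (subst sum.delta) auto
      finally show ?thesis using False by simp
    qed
    finally show ?thesis .
  qed
  have "(\<chi> m. if m = k then row k M1 + x else row m M1) = M2"
  proof -
    have s: "(\<Sum>i\<in>UNIV-{k}. u i * v i) = (\<Sum>i\<in>UNIV. u i * v i) - u k * v k"
      by (simp add: sum_diff1)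
    show ?thesis
    unfolding vec_eq_iff proof (intro allI)
      fix m j
      show "(\<chi> m. if m = k then row k M1 + x else row m M1) $ m $ j = M2 $ m $ j"
        by (cases "m = k"; cases "j = k") (simp_all add: row_def M1_def M2_def xj D_def s)
    qed
  qed
  moreover have "det (\<chi> m. if m = k then row k M1 + x else row m M1) = det M1"
    by (rule det_row_span[OF xspan])
  ultimately have dM2: "det M2 = det M" using dM1 by simp
  show ?thesis
  proof (cases "D = 0")
    case True
    have "row k M2 = 0" using True by (simp add: M2_def row_def vec_eq_iff)
    then have "det M2 = 0" by (rule det_zero_row)
    then show ?thesis using dM2 True M_def D_def by simp
  next
    case False
    define M3 :: "complex^'n^'n" where "M3 = (\<chi> i j. if i = j then (if i = k then D else c) else 0)"
    have M3e: "M3 = (\<chi> i. if i = k then row k M2 else row i M2 + (c * u i / (u k * D)) *s row k M2)"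
    unfolding vec_eq_iff proof (intro allI)
      fix m j
      show "M3 $ m $ j = (\<chi> i. if i = k then row k M2 else row i M2 + (c * u i / (u k * D)) *s row k M2) $ m $ j"
        using uk False by (cases "m = k"; cases "j = k"; cases "m = j") (simp_all add: row_def M3_def M2_def)
    qed
    have "det M3 = det M2" unfolding M3e by (rule det_rows_add_multiple)
    moreover have "det M3 = (\<Prod>i\<in>UNIV. if i = k then D else c)"
      by (subst det_diagonal) (auto simp: M3_def)
    moreover have "(\<Prod>i\<in>UNIV. if i = k then D else c) = D * c ^ (CARD('n) - 1)"
    proof -
      have "(\<Prod>i\<in>UNIV. if i = k then D else c) = (if k = k then D else c) * (\<Prod>i\<in>UNIV-{k}. if i = k then D else c)"
        by (rule prod.remove) auto
      also have "(\<Prod>i\<in>UNIV-{k}. if i = k then D else c) = (\<Prod>i\<in>UNIV-{k}. c)"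
        by (rule prod.cong) auto
      also have "\<dots> = c ^ (CARD('n) - 1)" by (simp add: card_Diff_singleton)
      finally show ?thesis by simp
    qed
    ultimately show ?thesis using dM2 M_def D_def by (simp add: mult.commute)
  qed
qed

lemma sum_gp:
  fixes x y x' y' :: "'n::finite \<Rightarrow> complex"
  shows "(\<Sum>k\<in>UNIV. (c * (if i = k then 1 else 0) + d * x i * y k) * (e * (if k = j then 1 else 0) + f * x' k * y' j))
   = c*e*(if i = j then 1 else 0) + c*f*x' i*y' j + d*e*x i*y j + d*f*(\<Sum>k\<in>UNIV. y k * x' k)*x i*y' j"
proof -
  have "(\<Sum>k\<in>UNIV. (c * (if i = k then 1 else 0) + d * x i * y k) * (e * (if k = j then 1 else 0) + f * x' k * y' j))
    = (\<Sum>k\<in>UNIV. (if k = i then c * (e * (if k = j then 1 else 0) + f * x' k * y' j) else 0)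
        + (if k = j then d * e * x i * y k else 0) + (d * f * x i * y' j) * (y k * x' k))"
    by (intro sum.cong) (auto simp: algebra_simps)
  also have "\<dots> = c*e*(if i = j then 1 else 0) + c*f*x' i*y' j + d*e*x i*y j + d*f*(\<Sum>k\<in>UNIV. y k * x' k)*x i*y' j"
    by (simp add: sum.distrib sum_distrib_left[symmetric] algebra_simps) (simp add: sum_distrib_left mult_ac)
  finally show ?thesis .
qed

lemma sum_ds:
  fixes x y x' y' :: "'n::finite \<Rightarrow> complex"
  shows "(\<Sum>\<mu>\<in>UNIV. \<Sum>\<nu>\<in>UNIV. (p * (if \<mu> = \<nu> then 1 else 0) + q * x \<mu> * y \<nu>) * (r * (if \<mu> = \<nu> then 1 else 0) + t * x' \<mu> * y' \<nu>))
   = p * r * of_nat CARD('n) + p * t * (\<Sum>\<mu>\<in>UNIV. x' \<mu> * y' \<mu>) + q * r * (\<Sum>\<mu>\<in>UNIV. x \<mu> * y \<mu>)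
     + q * t * (\<Sum>\<mu>\<in>UNIV. x \<mu> * x' \<mu>) * (\<Sum>\<nu>\<in>UNIV. y \<nu> * y' \<nu>)"
proof -
  have "(\<Sum>\<mu>\<in>UNIV. \<Sum>\<nu>\<in>UNIV. (p * (if \<mu> = \<nu> then 1 else 0) + q * x \<mu> * y \<nu>) * (r * (if \<mu> = \<nu> then 1 else 0) + t * x' \<mu> * y' \<nu>))
    = (\<Sum>\<mu>\<in>UNIV. (p * r + p * t * x' \<mu> * y' \<mu> + q * r * x \<mu> * y \<mu>) + (q * t * x \<mu> * x' \<mu>) * (\<Sum>\<nu>\<in>UNIV. y \<nu> * y' \<nu>))"
  proof (intro sum.cong refl)
    fix \<mu> :: 'n
    have "(\<Sum>\<nu>\<in>UNIV. (p * (if \<mu> = \<nu> then 1 else 0) + q * x \<mu> * y \<nu>) * (r * (if \<mu> = \<nu> then 1 else 0) + t * x' \<mu> * y' \<nu>))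
      = (\<Sum>\<nu>\<in>UNIV. (if \<nu> = \<mu> then p * r + p * t * x' \<mu> * y' \<nu> + q * r * x \<mu> * y \<nu> else 0) + (q * t * x \<mu> * x' \<mu>) * (y \<nu> * y' \<nu>))"
      by (intro sum.cong) (auto simp: algebra_simps)
    also have "\<dots> = (p * r + p * t * x' \<mu> * y' \<mu> + q * r * x \<mu> * y \<mu>) + (q * t * x \<mu> * x' \<mu>) * (\<Sum>\<nu>\<in>UNIV. y \<nu> * y' \<nu>)"
      by (simp add: sum.distrib sum_distrib_left[symmetric])
    finally show "(\<Sum>\<nu>\<in>UNIV. (p * (if \<mu> = \<nu> then 1 else 0) + q * x \<mu> * y \<nu>) * (r * (if \<mu> = \<nu> then 1 else 0) + t * x' \<mu> * y' \<nu>))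
      = (p * r + p * t * x' \<mu> * y' \<mu> + q * r * x \<mu> * y \<mu>) + (q * t * x \<mu> * x' \<mu>) * (\<Sum>\<nu>\<in>UNIV. y \<nu> * y' \<nu>)" .
  qed
  also have "\<dots> = p * r * of_nat CARD('n) + p * t * (\<Sum>\<mu>\<in>UNIV. x' \<mu> * y' \<mu>) + q * r * (\<Sum>\<mu>\<in>UNIV. x \<mu> * y \<mu>)
     + q * t * (\<Sum>\<mu>\<in>UNIV. x \<mu> * x' \<mu>) * (\<Sum>\<nu>\<in>UNIV. y \<nu> * y' \<nu>)"
  proof -
    have e: "(\<Sum>\<mu>\<in>UNIV. A \<mu> + B \<mu> * S) = (\<Sum>\<mu>\<in>UNIV. A \<mu>) + (\<Sum>\<mu>\<in>UNIV. B \<mu>) * S"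
      for A B :: "'n \<Rightarrow> complex" and S by (simp add: sum.distrib sum_distrib_right)
    have f: "(\<Sum>\<mu>\<in>UNIV. q * t * x \<mu> * x' \<mu>) = q * t * (\<Sum>\<mu>\<in>UNIV. x \<mu> * x' \<mu>)"
      by (simp add: sum_distrib_left mult.assoc)
    have g: "(\<Sum>\<mu>\<in>UNIV. p * r + p * t * x' \<mu> * y' \<mu> + q * r * x \<mu> * y \<mu>)
       = p * r * of_nat CARD('n) + p * t * (\<Sum>\<mu>\<in>UNIV. x' \<mu> * y' \<mu>) + q * r * (\<Sum>\<mu>\<in>UNIV. x \<mu> * y \<mu>)"
      by (simp add: sum.distrib sum_distrib_left mult.assoc)
    show ?thesis unfolding e f g ..
  qed
  finally show ?thesis .
qed

lemma matrix_inv_eq: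
  fixes A B :: "'a::comm_ring_1^'n::finite^'n"
  assumes "A ** B = mat 1" "B ** A = mat 1"
  shows "matrix_inv A = B"
proof -
  have ex: "\<exists>A'. A ** A' = mat 1 \<and> A' ** A = mat 1" using assms by blast
  define C where "C = matrix_inv A"
  have C: "A ** C = mat 1 \<and> C ** A = mat 1"
    unfolding C_def matrix_inv_def by (rule someI_ex[OF ex])
  have "C = C ** (A ** B)" using assms by (simp add: matrix_mul_rid)
  also have "\<dots> = (C ** A) ** B" by (simp add: matrix_mul_assoc)
  also have "\<dots> = B" using C by (simp add: matrix_mul_lid)
  finally show ?thesis unfolding C_def .
qed

lemma sq_norm: "sq z = (norm z)^2"
  unfolding sq_def norm_vec_def L2_set_def by (simp add: sum_nonneg)

lemma sq_pos: "z \<noteq> 0 \<Longrightarrow> sq z > 0"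
  by (simp add: sq_norm)

lemma sq_nonneg: "sq z \<ge> 0"
  by (simp add: sq_norm)

lemma sum_zcz: "(\<Sum>i\<in>UNIV. z$i * cnj (z$i)) = complex_of_real (sq z)"
  unfolding sq_def of_real_sum by (intro sum.cong refl) (simp add: complex_mult_cnj cmod_power2)

lemma sum_czz: "(\<Sum>i\<in>UNIV. cnj (z$i) * z$i) = complex_of_real (sq z)"
  using sum_zcz[of z] by (simp add: mult.commute)

lemma N_pos: "CARD('n::finite) > 0" by simp

lemma metric_entry: "metric \<kappa> z $ \<mu> $ \<nu> = of_real (Fpot \<kappa> CARD('n) (sq z)) * (if \<mu> = \<nu> then 1 else 0)
    + of_real (deriv (Fpot \<kappa> CARD('n)) (sq z)) * cnj (z$\<mu>) * z$\<nu>"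
  for z :: "complex^'n::finite"
  by (simp add: metric_def)

lemma G_pos:
  fixes z :: "complex^'n::finite"
  assumes "z \<noteq> 0" "\<kappa> > 0"
  shows "Fpot \<kappa> CARD('n) (sq z) + deriv (Fpot \<kappa> CARD('n)) (sq z) * sq z > 0"
proof -
  have s: "sq z > 0" using sq_pos assms by auto
  have Np: "CARD('n) > 0" by simp
  have "Fpot \<kappa> CARD('n) (sq z) + deriv (Fpot \<kappa> CARD('n)) (sq z) * sq z = Gd \<kappa> CARD('n) (sq z)"
    by (simp add: Gd_def)
  also have "\<dots> = Fpot \<kappa> CARD('n) (sq z) * sq z ^ CARD('n) / (sq z ^ CARD('n) + \<kappa>)"
    using Gd_eq(2)[OF s assms(2) Np] .
  also have "\<dots> > 0" using Fpot_pos[OF s assms(2), where N="CARD('n)"] s assms by (simp add: add_pos_pos)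
  finally show ?thesis .
qed

lemma invmetric_eq:
  fixes z :: "complex^'n::finite"
  assumes "z \<noteq> 0" "\<kappa> > 0"
  defines "cF \<equiv> complex_of_real (Fpot \<kappa> CARD('n) (sq z))"
    and "cF1 \<equiv> complex_of_real (deriv (Fpot \<kappa> CARD('n)) (sq z))"
  shows "invmetric \<kappa> z \<mu> \<nu> = (1/cF) * (if \<nu> = \<mu> then 1 else 0)
      + (- (cF1/(cF + cF1 * of_real (sq z))) / cF) * cnj (z$\<nu>) * z$\<mu>"
proof -
  have s: "sq z > 0" using sq_pos assms by auto
  have Np: "CARD('n) > 0" by simp
  have F0: "cF \<noteq> 0" using Fpot_pos[OF s assms(2), where N="CARD('n)"] by (simp add: cF_def)
  have G0: "cF + cF1 * of_real (sq z) \<noteq> 0"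
  proof -
    have e: "cF + cF1 * of_real (sq z) = of_real (Fpot \<kappa> CARD('n) (sq z) + deriv (Fpot \<kappa> CARD('n)) (sq z) * sq z)"
      by (simp add: cF_def cF1_def)
    show ?thesis unfolding e of_real_eq_0_iff using G_pos[OF assms(1,2)] by simp
  qed
  define ac where "ac = cF1/(cF + cF1 * of_real (sq z))"
  define B :: "complex^'n^'n" where "B = (\<chi> i j. (1/cF) * (if i = j then 1 else 0) + (- ac / cF) * cnj (z$i) * z$j)"
  have coef: "cF * (- ac / cF) + cF1 * (1 / cF) + cF1 * (- ac / cF) * of_real (sq z) = 0"
  proof -
    have acG: "ac * (cF + cF1 * of_real (sq z)) = cF1" using G0 by (simp add: ac_def)
    have "cF * (- ac / cF) + cF1 * (1 / cF) + cF1 * (- ac / cF) * of_real (sq z)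
        = (cF1 - ac * (cF + cF1 * of_real (sq z))) / cF"
      using F0 by (simp add: field_simps)
    then show ?thesis using acG by simp
  qed
  have coef2: "1 / cF * cF1 + - ac / cF * cF + - ac / cF * cF1 * of_real (sq z) = 0"
    using coef by (simp add: algebra_simps)
  have "metric \<kappa> z ** B = mat 1"
    unfolding vec_eq_iff
  proof (intro allI)
    fix i j
    have "(metric \<kappa> z ** B) $ i $ j = (\<Sum>k\<in>UNIV. (cF * (if i = k then 1 else 0) + cF1 * cnj (z$i) * z$k)
        * ((1/cF) * (if k = j then 1 else 0) + (- ac / cF) * cnj (z$k) * z$j))"
      by (simp add: matrix_matrix_mult_def metric_entry B_def cF_def cF1_def)
    also have "\<dots> = cF * (1/cF) * (if i = j then 1 else 0) + (cF * (- ac / cF) + cF1 * (1 / cF)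
       + cF1 * (- ac / cF) * of_real (sq z)) * cnj (z$i) * z$j"
      by (subst sum_gp[where c=cF and d=cF1 and x="\<lambda>i. cnj (z$i)" and y="\<lambda>k. z$k" and e="1/cF"
          and f="-ac/cF" and x'="\<lambda>k. cnj (z$k)" and y'="\<lambda>j. z$j"]) (simp add: sum_zcz algebra_simps)
    also have "\<dots> = mat 1 $ i $ j" unfolding coef using F0 by (simp add: mat_def)
    finally show "(metric \<kappa> z ** B) $ i $ j = mat 1 $ i $ j" .
  qed
  moreover have "B ** metric \<kappa> z = mat 1"
    unfolding vec_eq_iff
  proof (intro allI)
    fix i j
    have "(B ** metric \<kappa> z) $ i $ j = (\<Sum>k\<in>UNIV. ((1/cF) * (if i = k then 1 else 0) + (- ac / cF) * cnj (z$i) * z$k)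
        * (cF * (if k = j then 1 else 0) + cF1 * cnj (z$k) * z$j))"
      by (simp add: matrix_matrix_mult_def metric_entry B_def cF_def cF1_def)
    also have "\<dots> = (1/cF) * cF * (if i = j then 1 else 0) + (1 / cF * cF1 + - ac / cF * cF
       + - ac / cF * cF1 * of_real (sq z)) * cnj (z$i) * z$j"
      by (subst sum_gp[where c="1/cF" and d="-ac/cF" and x="\<lambda>i. cnj (z$i)" and y="\<lambda>k. z$k" and e="cF"
          and f="cF1" and x'="\<lambda>k. cnj (z$k)" and y'="\<lambda>j. z$j"]) (simp add: sum_zcz algebra_simps)
    also have "\<dots> = mat 1 $ i $ j" unfolding coef2 using F0 by (simp add: mat_def)
    finally show "(B ** metric \<kappa> z) $ i $ j = mat 1 $ i $ j" .
  qed
  ultimately have "matrix_inv (metric \<kappa> z) = B" by (rule matrix_inv_eq)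
  then show ?thesis unfolding invmetric_def by (simp add: B_def ac_def)
qed

lemma vol_eq:
  fixes z :: "complex^'n::finite"
  assumes "z \<noteq> 0" "\<kappa> > 0"
  shows "vol \<kappa> z = 1"
proof -
  have s: "sq z > 0" using sq_pos assms by auto
  have Np: "CARD('n) > 0" by simp
  define F where "F = Fpot \<kappa> CARD('n) (sq z)"
  define F1 where "F1 = deriv (Fpot \<kappa> CARD('n)) (sq z)"
  have F0: "F > 0" using Fpot_pos[OF s assms(2), where N="CARD('n)"] by (simp add: F_def)
  have "metric \<kappa> z = (\<chi> i j. complex_of_real F * (if i = j then 1 else 0) + (of_real F1 * cnj (z$i)) * z$j)"
    by (simp add: metric_def F_def F1_def)
  then have "det (metric \<kappa> z) = of_real F ^ (CARD('n) - 1) * (of_real F + (\<Sum>i\<in>UNIV. of_real F1 * cnj (z$i) * z$i))"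
    using det_rank_one[of "complex_of_real F" "\<lambda>i. of_real F1 * cnj (z$i)" "\<lambda>j. z$j"] F0 by simp
  also have "(\<Sum>i\<in>UNIV. of_real F1 * cnj (z$i) * z$i) = of_real F1 * of_real (sq z)"
    by (simp add: mult.assoc sum_distrib_left[symmetric] sum_czz)
  finally have "det (metric \<kappa> z) = of_real (F ^ (CARD('n) - 1) * (F + F1 * sq z))" by simp
  moreover have "F ^ (CARD('n) - 1) * (F + F1 * sq z) = 1"
  proof -
    have "F + F1 * sq z = F * sq z ^ CARD('n) / (sq z ^ CARD('n) + \<kappa>)"
      using Gd_eq(2)[OF s assms(2) Np] by (simp add: Gd_def F_def F1_def)
    moreover have "F ^ (CARD('n) - 1) * F = F ^ CARD('n)"
      by (metis N_pos Suc_diff_1 power_Suc2)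
    ultimately have "F ^ (CARD('n) - 1) * (F + F1 * sq z) = F ^ CARD('n) * sq z ^ CARD('n) / (sq z ^ CARD('n) + \<kappa>)"
      by (simp add: mult.assoc[symmetric])
    also have "\<dots> = 1"
    proof -
      have "sq z ^ CARD('n) + \<kappa> > 0" using s assms by (simp add: add_pos_pos)
      then show ?thesis using Fpot_pow[OF s assms(2) Np] s by (simp add: F_def)
    qed
    finally show ?thesis .
  qed
  ultimately show ?thesis unfolding vol_def by simp
qed

lemma a_alg: "F > 0 \<Longrightarrow> s > 0 \<Longrightarrow> S > 0 \<Longrightarrow> (P::real) > 0 \<Longrightarrow> (-\<kappa>*F/(s*P)) / (F*S/P) = -\<kappa>/(s*S)"
  by (simp add: field_simps)

lemma part2_alg:
  fixes F s S \<kappa> Nr P :: real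
  assumes "F > 0" "s > 0" "S > 0" "P > 0" "P = S + \<kappa>"
  shows "(1/F)*(F/P)*Nr + (1/F)*(-F*(Nr*S+\<kappa>)/(s*P^2)) * s + (-(-\<kappa>/(s*S))/F)*(F/P) * s
     + (-(-\<kappa>/(s*S))/F)*(-F*(Nr*S+\<kappa>)/(s*P^2)) * s * s = 0"
  using assms(1-4) by (simp add: field_simps power2_eq_square) (simp add: assms(5) algebra_simps)

lemma a_eq:
  assumes "s > 0" "\<kappa> > 0" "N > 0"
  shows "deriv (Fpot \<kappa> N) s / (Fpot \<kappa> N s + deriv (Fpot \<kappa> N) s * s) = - \<kappa> / (s * s^N)"
proof -
  have F: "Fpot \<kappa> N s > 0" using Fpot_pos assms by auto
  have P: "s^N + \<kappa> > 0" using assms by (simp add: add_pos_pos)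
  have "Fpot \<kappa> N s + deriv (Fpot \<kappa> N) s * s = Fpot \<kappa> N s * s^N / (s^N + \<kappa>)"
    using Gd_eq(2)[OF assms] by (simp add: Gd_def)
  then show ?thesis unfolding Fpot_deriv_eq[OF assms] using a_alg[OF F assms(1) _ P, of "s^N" \<kappa>] assms
    by simp
qed

lemma beta_eq: "beta \<kappa> \<nu> = (\<lambda>w. 1 * of_real (hf \<kappa> CARD('n) (sq w)) * w$\<nu>)"
  for \<nu> :: "'n::finite"
  by (rule ext) (simp add: beta_def hf_def divide_inverse mult.commute)

definition hdv :: "real \<Rightarrow> nat \<Rightarrow> real \<Rightarrow> real" where
  "hdv \<kappa> N s = - Fpot \<kappa> N s * (real N * s^N + \<kappa>) / (s * (s^N + \<kappa>)^2)"

definition Fd :: "real \<Rightarrow> nat \<Rightarrow> real \<Rightarrow> real" where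
  "Fd \<kappa> N s = - \<kappa> * Fpot \<kappa> N s / (s * (s^N + \<kappa>))"

lemma part1:
  fixes z :: "complex^'n::finite"
  assumes "z \<noteq> 0" "\<kappa> > 0"
  shows "dbar01 (beta \<kappa>) \<mu> \<nu> z = 0"
proof -
  have s: "sq z > 0" using sq_pos assms by auto
  have Np: "CARD('n) > 0" by simp
  note d = hf_deriv[OF s assms(2) Np]
  show ?thesis unfolding dbar01_def
    using wirt_lin(2)[OF d, of "beta \<kappa> \<nu>" 1 \<nu> \<mu>] wirt_lin(2)[OF d, of "beta \<kappa> \<mu>" 1 \<mu> \<nu>]
    by (simp add: beta_eq)
qed

lemma dz_beta:
  fixes z :: "complex^'n::finite"
  assumes "z \<noteq> 0" "\<kappa> > 0"
  shows "dz \<mu> (beta \<kappa> \<nu>) z = of_real (hdv \<kappa> CARD('n) (sq z)) * cnj (z$\<mu>) * z$\<nu>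
     + of_real (hf \<kappa> CARD('n) (sq z)) * (if \<mu> = \<nu> then 1 else 0)"
proof -
  have s: "sq z > 0" using sq_pos assms by auto
  have Np: "CARD('n) > 0" by simp
  note d = hf_deriv[OF s assms(2) Np]
  show ?thesis
    using wirt_lin(1)[OF d, of "beta \<kappa> \<nu>" 1 \<nu> \<mu>]
    by (simp add: beta_eq hdv_def)
qed

lemma part2:
  fixes z :: "complex^'n::finite"
  assumes "z \<noteq> 0" "\<kappa> > 0"
  shows "(\<Sum>\<mu>\<in>UNIV. \<Sum>\<nu>\<in>UNIV. invmetric \<kappa> z \<mu> \<nu> * dz \<mu> (beta \<kappa> \<nu>) z) = 0"
proof -
  have s: "sq z > 0" using sq_pos assms by auto
  have Np: "CARD('n) > 0" by simp
  define F where "F = Fpot \<kappa> CARD('n) (sq z)"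
  define F1 where "F1 = deriv (Fpot \<kappa> CARD('n)) (sq z)"
  define h where "h = hf \<kappa> CARD('n) (sq z)"
  define h' where "h' = hdv \<kappa> CARD('n) (sq z)"
  define a where "a = F1 / (F + F1 * sq z)"
  have F0: "F > 0" using Fpot_pos[OF s assms(2), where N="CARD('n)"] by (simp add: F_def)
  have aeq: "a = - \<kappa> / (sq z * sq z ^ CARD('n))" using a_eq[OF s assms(2) Np] by (simp add: a_def F_def F1_def)
  have inv: "invmetric \<kappa> z \<mu> \<nu> = of_real (1/F) * (if \<mu> = \<nu> then 1 else 0) + of_real (- a / F) * z$\<mu> * cnj (z$\<nu>)" for \<mu> \<nu>
    unfolding invmetric_eq[OF assms] by (simp add: F_def F1_def a_def eq_commute[of \<nu> \<mu>] mult_ac)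
  have dzb: "dz \<mu> (beta \<kappa> \<nu>) z = of_real h * (if \<mu> = \<nu> then 1 else 0) + of_real h' * cnj (z$\<mu>) * z$\<nu>" for \<mu> \<nu>
    unfolding dz_beta[OF assms] by (simp add: h_def h'_def)
  have "(\<Sum>\<mu>\<in>UNIV. \<Sum>\<nu>\<in>UNIV. invmetric \<kappa> z \<mu> \<nu> * dz \<mu> (beta \<kappa> \<nu>) z)
     = of_real (1/F) * of_real h * of_nat CARD('n) + of_real (1/F) * of_real h' * of_real (sq z)
       + of_real (- a / F) * of_real h * of_real (sq z) + of_real (- a / F) * of_real h' * of_real (sq z) * of_real (sq z)"
    unfolding inv dzb
    by (subst sum_ds[where p="of_real (1/F)" and q="of_real (- a / F)" and x="\<lambda>\<mu>. z$\<mu>" and y="\<lambda>\<nu>. cnj (z$\<nu>)"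
        and r="of_real h" and t="of_real h'" and x'="\<lambda>\<mu>. cnj (z$\<mu>)" and y'="\<lambda>\<nu>. z$\<nu>"]) (simp add: sum_zcz sum_czz)
  also have "\<dots> = of_real ((1/F) * h * real CARD('n) + (1/F) * h' * sq z + (- a / F) * h * sq z + (- a / F) * h' * sq z * sq z)"
    by simp
  also have "(1/F) * h * real CARD('n) + (1/F) * h' * sq z + (- a / F) * h * sq z + (- a / F) * h' * sq z * sq z = 0"
  proof -
    have P: "sq z ^ CARD('n) + \<kappa> > 0" using s assms by (simp add: add_pos_pos)
    have S: "sq z ^ CARD('n) > 0" using s by simp
    show ?thesis unfolding aeq h_def h'_def hf_eq[OF s assms(2) Np] hdv_def F_def[symmetric]
      using part2_alg[OF F0 s S P, of \<kappa> "real CARD('n)"] by simp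
  qed
  finally show ?thesis by simp
qed

lemma flat_eq: "flat \<kappa> (xi :: 'n::finite vfield) = (\<lambda>k i w. case k of
      D10 \<Rightarrow> (-(\<i>/2)) * of_real (Gd \<kappa> CARD('n) (sq w)) * cnj (w$i)
    | D01 \<Rightarrow> (\<i>/2) * of_real (Gd \<kappa> CARD('n) (sq w)) * w$i)"
  (is "_ = ?r")
proof (intro ext)
  fix k i and w :: "complex^'n"
  define F where "F = complex_of_real (Fpot \<kappa> CARD('n) (sq w))"
  define F1 where "F1 = complex_of_real (deriv (Fpot \<kappa> CARD('n)) (sq w))"
  have G: "complex_of_real (Gd \<kappa> CARD('n) (sq w)) = F + F1 * of_real (sq w)"
    by (simp add: Gd_def F_def F1_def)
  show "flat \<kappa> xi k i w = ?r k i w"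
  proof (cases k)
    case D10
    have "(\<Sum>\<nu>\<in>UNIV. metric \<kappa> w $ i $ \<nu> * (- (\<i> / 2) * cnj (w $ \<nu>)))
       = (\<Sum>\<nu>\<in>UNIV. (if \<nu> = i then F * (- (\<i> / 2) * cnj (w $ i)) else 0)
           + (F1 * cnj (w$i) * (- (\<i> / 2))) * (w$\<nu> * cnj (w $ \<nu>)))"
      by (intro sum.cong refl) (auto simp: metric_entry F_def F1_def algebra_simps)
    also have "\<dots> = (-(\<i>/2)) * (F + F1 * of_real (sq w)) * cnj (w$i)"
      by (simp only: sum.distrib sum_distrib_left[symmetric] sum_zcz) (simp add: algebra_simps)
    finally show ?thesis using D10 by (simp add: flat_def xi_def G)
  next
    case D01
    have "(\<Sum>\<mu>\<in>UNIV. metric \<kappa> w $ \<mu> $ i * (\<i> / 2 * w $ \<mu>))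
       = (\<Sum>\<mu>\<in>UNIV. (if \<mu> = i then F * (\<i> / 2 * w $ i) else 0)
           + (F1 * w$i * (\<i> / 2)) * (w$\<mu> * cnj (w $ \<mu>)))"
      by (intro sum.cong refl) (auto simp: metric_entry F_def F1_def algebra_simps)
    also have "\<dots> = (\<i>/2) * (F + F1 * of_real (sq w)) * w$i"
      by (simp only: sum.distrib sum_distrib_left[symmetric] sum_zcz) (simp add: algebra_simps)
    finally show ?thesis using D01 by (simp add: flat_def xi_def G)
  qed
qed

lemma part5:
  fixes z :: "complex^'n::finite"
  assumes "z \<noteq> 0" "\<kappa> > 0"
  shows "omega \<kappa> k \<mu> \<nu> z - of_real \<kappa> * omegat \<kappa> k \<mu> \<nu> z = 2 * d1 (flat \<kappa> xi) k \<mu> \<nu> z"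
proof -
  have s: "sq z > 0" using sq_pos assms by auto
  have Np: "CARD('n) > 0" by simp
  define F where "F = Fpot \<kappa> CARD('n) (sq z)"
  define F' where "F' = Fd \<kappa> CARD('n) (sq z)"
  define h where "h = hf \<kappa> CARD('n) (sq z)"
  define h' where "h' = hdv \<kappa> CARD('n) (sq z)"
  have dF: "(Fpot \<kappa> CARD('n) has_real_derivative F') (at (sq z))"
    unfolding F'_def Fd_def using Fpot_deriv[OF s assms(2) Np] .
  have dh: "(hf \<kappa> CARD('n) has_real_derivative h') (at (sq z))"
    unfolding h'_def hdv_def using hf_deriv[OF s assms(2) Np] .
  have dG: "(Gd \<kappa> CARD('n) has_real_derivative F' - \<kappa> * h') (at (sq z))"
    unfolding F'_def Fd_def h'_def hdv_def using Gd_deriv[OF s assms(2) Np] .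
  have Geq: "Gd \<kappa> CARD('n) (sq z) = F - \<kappa> * h"
    unfolding F_def h_def using Gd_eq(1)[OF s assms(2) Np] .
  note wl = wirt_lin[where z=z] and wc = wirt_cnj[where z=z]
  have o1: "dz \<mu> (\<lambda>w. of_real (Fpot \<kappa> CARD('n) (sq w)) * w$\<nu>) z = of_real F' * cnj (z$\<mu>) * z$\<nu> + of_real F * (if \<mu> = \<nu> then 1 else 0)"
    for \<mu> \<nu> using wl(1)[OF dF, of "\<lambda>w. of_real (Fpot \<kappa> CARD('n) (sq w)) * w$\<nu>" 1 \<nu> \<mu>] by (simp add: F_def)
  have o2: "dzb \<mu> (\<lambda>w. of_real (Fpot \<kappa> CARD('n) (sq w)) * w$\<nu>) z = of_real F' * z$\<mu> * z$\<nu>"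
    for \<mu> \<nu> using wl(2)[OF dF, of "\<lambda>w. of_real (Fpot \<kappa> CARD('n) (sq w)) * w$\<nu>" 1 \<nu> \<mu>] by simp
  have b1: "dz \<mu> (beta \<kappa> \<nu>) z = of_real h' * cnj (z$\<mu>) * z$\<nu> + of_real h * (if \<mu> = \<nu> then 1 else 0)"
    for \<mu> \<nu> using wl(1)[OF dh, of "beta \<kappa> \<nu>" 1 \<nu> \<mu>] by (simp add: h_def beta_eq)
  have b2: "dzb \<mu> (beta \<kappa> \<nu>) z = of_real h' * z$\<mu> * z$\<nu>"
    for \<mu> \<nu> using wl(2)[OF dh, of "beta \<kappa> \<nu>" 1 \<nu> \<mu>] by (simp add: beta_eq)
  have g1: "dz \<mu> (\<lambda>w. (\<i>/2) * of_real (Gd \<kappa> CARD('n) (sq w)) * w$\<nu>) z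
      = (\<i>/2) * (of_real (F' - \<kappa> * h') * cnj (z$\<mu>) * z$\<nu> + of_real (F - \<kappa> * h) * (if \<mu> = \<nu> then 1 else 0))"
    for \<mu> \<nu> using wl(1)[OF dG, of "\<lambda>w. (\<i>/2) * of_real (Gd \<kappa> CARD('n) (sq w)) * w$\<nu>" "\<i>/2" \<nu> \<mu>] by (simp add: Geq)
  have g2: "dzb \<mu> (\<lambda>w. (\<i>/2) * of_real (Gd \<kappa> CARD('n) (sq w)) * w$\<nu>) z
      = (\<i>/2) * of_real (F' - \<kappa> * h') * z$\<mu> * z$\<nu>"
    for \<mu> \<nu> using wl(2)[OF dG, of "\<lambda>w. (\<i>/2) * of_real (Gd \<kappa> CARD('n) (sq w)) * w$\<nu>" "\<i>/2" \<nu> \<mu>] by simp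
  have g3: "dz \<mu> (\<lambda>w. (-(\<i>/2)) * of_real (Gd \<kappa> CARD('n) (sq w)) * cnj (w$\<nu>)) z
      = (-(\<i>/2)) * of_real (F' - \<kappa> * h') * cnj (z$\<mu>) * cnj (z$\<nu>)"
    for \<mu> \<nu> using wc(1)[OF dG, of "\<lambda>w. (-(\<i>/2)) * of_real (Gd \<kappa> CARD('n) (sq w)) * cnj (w$\<nu>)" "-(\<i>/2)" \<nu> \<mu>] by simp
  have g4: "dzb \<mu> (\<lambda>w. (-(\<i>/2)) * of_real (Gd \<kappa> CARD('n) (sq w)) * cnj (w$\<nu>)) z
      = (-(\<i>/2)) * (of_real (F' - \<kappa> * h') * z$\<mu> * cnj (z$\<nu>) + of_real (F - \<kappa> * h) * (if \<mu> = \<nu> then 1 else 0))"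
    for \<mu> \<nu> using wc(2)[OF dG, of "\<lambda>w. (-(\<i>/2)) * of_real (Gd \<kappa> CARD('n) (sq w)) * cnj (w$\<nu>)" "-(\<i>/2)" \<nu> \<mu>] by (simp add: Geq)
  have z0: "dz \<mu> (\<lambda>w. 0) z = 0" "dzb \<mu> (\<lambda>w. 0) z = 0" for \<mu> by (simp_all add: dz_zero dzb_zero)
  show ?thesis
  proof (cases k)
    case B20
    show ?thesis unfolding B20 omega_def omegat_def d1_def flat_eq
      by (simp only: deg2.case deg1.case z0 g3) (simp add: algebra_simps)
  next
    case B11
    show ?thesis unfolding B11 omega_def omegat_def d1_def flat_eq
      by (simp only: deg2.case deg1.case z0 g1 g4 o1 b1) (simp add: algebra_simps eq_commute[of \<nu> \<mu>])
  next
    case B02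
    show ?thesis unfolding B02 omega_def omegat_def d1_def flat_eq dbar01_def
      by (simp only: deg2.case deg1.case z0 g2 o2 b2) (simp add: algebra_simps)
  qed
qed

lemma sum4_perm:
  fixes X :: "'a::finite \<Rightarrow> 'a \<Rightarrow> 'a \<Rightarrow> 'a \<Rightarrow> complex"
  shows "(\<Sum>\<mu>\<in>UNIV. \<Sum>\<nu>\<in>UNIV. \<Sum>\<alpha>\<in>UNIV. \<Sum>\<rho>\<in>UNIV. X \<mu> \<nu> \<alpha> \<rho>)
       = (\<Sum>\<alpha>\<in>UNIV. \<Sum>\<rho>\<in>UNIV. \<Sum>\<mu>\<in>UNIV. \<Sum>\<nu>\<in>UNIV. X \<mu> \<nu> \<alpha> \<rho>)"
proof -
  have "(\<Sum>\<mu>\<in>UNIV. \<Sum>\<nu>\<in>UNIV. \<Sum>\<alpha>\<in>UNIV. \<Sum>\<rho>\<in>UNIV. X \<mu> \<nu> \<alpha> \<rho>)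
      = (\<Sum>\<mu>\<in>UNIV. \<Sum>\<alpha>\<in>UNIV. \<Sum>\<nu>\<in>UNIV. \<Sum>\<rho>\<in>UNIV. X \<mu> \<nu> \<alpha> \<rho>)"
    by (rule sum.cong[OF refl]) (rule sum.swap)
  also have "\<dots> = (\<Sum>\<alpha>\<in>UNIV. \<Sum>\<mu>\<in>UNIV. \<Sum>\<nu>\<in>UNIV. \<Sum>\<rho>\<in>UNIV. X \<mu> \<nu> \<alpha> \<rho>)"
    by (rule sum.swap)
  also have "\<dots> = (\<Sum>\<alpha>\<in>UNIV. \<Sum>\<mu>\<in>UNIV. \<Sum>\<rho>\<in>UNIV. \<Sum>\<nu>\<in>UNIV. X \<mu> \<nu> \<alpha> \<rho>)"
    by (rule sum.cong[OF refl], rule sum.cong[OF refl]) (rule sum.swap)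
  also have "\<dots> = (\<Sum>\<alpha>\<in>UNIV. \<Sum>\<rho>\<in>UNIV. \<Sum>\<mu>\<in>UNIV. \<Sum>\<nu>\<in>UNIV. X \<mu> \<nu> \<alpha> \<rho>)"
    by (rule sum.cong[OF refl]) (rule sum.swap)
  finally show ?thesis .
qed

lemma sum4_reorder:
  fixes f g t u :: "'a::finite \<Rightarrow> 'a \<Rightarrow> complex"
  shows "(\<Sum>\<mu>\<in>UNIV. \<Sum>\<nu>\<in>UNIV. \<Sum>\<alpha>\<in>UNIV. \<Sum>\<rho>\<in>UNIV. f \<mu> \<alpha> * g \<rho> \<nu> * t \<mu> \<nu> * u \<alpha> \<rho>)
    = (\<Sum>\<alpha>\<in>UNIV. \<Sum>\<rho>\<in>UNIV. (\<Sum>\<mu>\<in>UNIV. f \<mu> \<alpha> * (\<Sum>\<nu>\<in>UNIV. t \<mu> \<nu> * g \<rho> \<nu>)) * u \<alpha> \<rho>)"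
  unfolding sum4_perm[of "\<lambda>\<mu> \<nu> \<alpha> \<rho>. f \<mu> \<alpha> * g \<rho> \<nu> * t \<mu> \<nu> * u \<alpha> \<rho>"]
  by (simp add: sum_distrib_left sum_distrib_right mult_ac)

lemma norm01_alg:
  fixes F s S \<kappa> P :: real
  assumes "F > 0" "s > 0" "S > 0" "P > 0" "P = S + \<kappa>"
  shows "(1/F) * (F/P)^2 * s + (-(-\<kappa>/(s*S))/F) * (F/P)^2 * s * s = F * s / (P * S)"
  using assms(1-4) by (simp add: field_simps power2_eq_square) (simp add: assms(5) algebra_simps)

lemma norm2_alg:
  fixes F s S \<kappa> P Nr :: real
  assumes "F > 0" "s > 0" "S > 0" "P > 0" "P = S + \<kappa>"
  defines "p \<equiv> 1/F" and "q \<equiv> -(-\<kappa>/(s*S))/F" and "h \<equiv> F/P" and "h' \<equiv> -F*(Nr*S+\<kappa>)/(s*P^2)"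
  shows "(p*(h*p))*h*Nr + (p*(h*p))*h' * s + (p*(h*q+h'*p+h'*q * s) + q*(h*p) + q*(h*q+h'*p+h'*q * s) * s)*h * s
     + (p*(h*q+h'*p+h'*q * s) + q*(h*p) + q*(h*q+h'*p+h'*q * s) * s)*h' * s * s = Nr * (Nr - 1) / P^2"
proof -
  have c1: "h*p = 1/P" using assms(1-4) unfolding h_def p_def by simp
  have d1: "h*q+h'*p+h'*q * s = -Nr/(s*P)"
    using assms(1-4) unfolding p_def q_def h_def h'_def
    by (simp add: field_simps power2_eq_square) (simp add: assms(5) algebra_simps)
  have c2: "p*(1/P) = 1/(F*P)" unfolding p_def by simp
  have d2: "p*(-Nr/(s*P)) + q*(1/P) + q*(-Nr/(s*P)) * s = (\<kappa>*(1-Nr) - Nr*S)/(s*S*F*P)"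
    using assms(1-4) unfolding p_def q_def by (simp add: field_simps)
  have e1: "h*Nr + h' * s = F*\<kappa>*(Nr-1)/P^2"
    using assms(1-4) unfolding h_def h'_def
    by (simp add: field_simps power2_eq_square) (simp add: assms(5) algebra_simps)
  have e2: "h + h' * s = F*S*(1-Nr)/P^2"
    using assms(1-4) unfolding h_def h'_def
    by (simp add: field_simps power2_eq_square) (simp add: assms(5) algebra_simps)
  have "(p*(h*p))*h*Nr + (p*(h*p))*h' * s + (p*(h*q+h'*p+h'*q * s) + q*(h*p) + q*(h*q+h'*p+h'*q * s) * s)*h * s
     + (p*(h*q+h'*p+h'*q * s) + q*(h*p) + q*(h*q+h'*p+h'*q * s) * s)*h' * s * s
     = (p*(h*p))*(h*Nr + h' * s) + (p*(h*q+h'*p+h'*q * s) + q*(h*p) + q*(h*q+h'*p+h'*q * s) * s) * s * (h + h' * s)"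
    by (simp add: algebra_simps)
  also have "\<dots> = (1/(F*P))*(F*\<kappa>*(Nr-1)/P^2) + ((\<kappa>*(1-Nr) - Nr*S)/(s*S*F*P)) * s * (F*S*(1-Nr)/P^2)"
    unfolding c1 d1 c2 d2 e1 e2 ..
  also have "\<dots> = Nr * (Nr - 1) / P^2"
    using assms(1-4) by (simp add: field_simps power2_eq_square) (simp add: assms(5) algebra_simps)
  finally show ?thesis .
qed

lemma omegat_comp:
  fixes z :: "complex^'n::finite"
  assumes "z \<noteq> 0" "\<kappa> > 0"
  shows "omegat \<kappa> B20 \<mu> \<nu> z = 0" "omegat \<kappa> B02 \<mu> \<nu> z = 0"
    "omegat \<kappa> B11 \<mu> \<nu> z = 2 * \<i> * (of_real (hf \<kappa> CARD('n) (sq z)) * (if \<mu> = \<nu> then 1 else 0)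
        + of_real (hdv \<kappa> CARD('n) (sq z)) * cnj (z$\<mu>) * z$\<nu>)"
  using part1[OF assms, of \<mu> \<nu>] dz_beta[OF assms, of \<mu> \<nu>]
  by (simp_all add: omegat_def d1_def dz_zero dzb_zero)

lemma norm01_eq:
  fixes z :: "complex^'n::finite"
  assumes "z \<noteq> 0" "\<kappa> > 0"
  shows "norm01 \<kappa> (beta \<kappa>) z = Fpot \<kappa> CARD('n) (sq z) * sq z / ((sq z ^ CARD('n) + \<kappa>) * sq z ^ CARD('n))"
proof -
  have s: "sq z > 0" using sq_pos assms by auto
  have Np: "CARD('n) > 0" by simp
  define F where "F = Fpot \<kappa> CARD('n) (sq z)"
  define F1 where "F1 = deriv (Fpot \<kappa> CARD('n)) (sq z)"
  define h where "h = hf \<kappa> CARD('n) (sq z)"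
  define a where "a = F1 / (F + F1 * sq z)"
  have F0: "F > 0" using Fpot_pos[OF s assms(2), where N="CARD('n)"] by (simp add: F_def)
  have P: "sq z ^ CARD('n) + \<kappa> > 0" using s assms by (simp add: add_pos_pos)
  have S: "sq z ^ CARD('n) > 0" using s by simp
  have aeq: "a = - \<kappa> / (sq z * sq z ^ CARD('n))" using a_eq[OF s assms(2) Np] by (simp add: a_def F_def F1_def)
  have inv: "invmetric \<kappa> z \<mu> \<nu> = of_real (1/F) * (if \<mu> = \<nu> then 1 else 0) + of_real (- a / F) * z$\<mu> * cnj (z$\<nu>)" for \<mu> \<nu>
    unfolding invmetric_eq[OF assms] by (simp add: F_def F1_def a_def eq_commute[of \<nu> \<mu>] mult_ac)
  have "(\<Sum>\<mu>\<in>UNIV. \<Sum>\<nu>\<in>UNIV. invmetric \<kappa> z \<mu> \<nu> * cnj (beta \<kappa> \<mu> z) * beta \<kappa> \<nu> z)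
    = (\<Sum>\<mu>\<in>UNIV. \<Sum>\<nu>\<in>UNIV. (of_real (1/F) * (if \<mu> = \<nu> then 1 else 0) + of_real (- a / F) * z$\<mu> * cnj (z$\<nu>))
         * (0 * (if \<mu> = \<nu> then 1 else 0) + of_real (h^2) * cnj (z$\<mu>) * z$\<nu>))"
    unfolding inv by (simp add: beta_eq h_def power2_eq_square mult_ac)
  also have "\<dots> = of_real (1/F) * of_real (h^2) * of_real (sq z) + of_real (- a / F) * of_real (h^2) * of_real (sq z) * of_real (sq z)"
    by (subst sum_ds[where p="of_real (1/F)" and q="of_real (- a / F)" and x="\<lambda>\<mu>. z$\<mu>" and y="\<lambda>\<nu>. cnj (z$\<nu>)"
        and r="0" and t="of_real (h^2)" and x'="\<lambda>\<mu>. cnj (z$\<mu>)" and y'="\<lambda>\<nu>. z$\<nu>"]) (simp add: sum_zcz sum_czz)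
  also have "\<dots> = of_real ((1/F) * h^2 * sq z + (- a / F) * h^2 * sq z * sq z)" by simp
  finally have "norm01 \<kappa> (beta \<kappa>) z = (1/F) * h^2 * sq z + (- a / F) * h^2 * sq z * sq z"
    unfolding norm01_def by simp
  also have "\<dots> = F * sq z / ((sq z ^ CARD('n) + \<kappa>) * sq z ^ CARD('n))"
    unfolding aeq h_def hf_eq[OF s assms(2) Np] F_def[symmetric]
    using norm01_alg[OF F0 s S P, of \<kappa>] by simp
  finally show ?thesis by (simp add: F_def)
qed

lemma norm2f_eq:
  fixes z :: "complex^'n::finite"
  assumes "z \<noteq> 0" "\<kappa> > 0"
  shows "norm2f \<kappa> (omegat \<kappa>) z = 4 * (real CARD('n) * (real CARD('n) - 1) / (sq z ^ CARD('n) + \<kappa>)^2)"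
proof -
  have s: "sq z > 0" using sq_pos assms by auto
  have Np: "CARD('n) > 0" by simp
  define F where "F = Fpot \<kappa> CARD('n) (sq z)"
  define F1 where "F1 = deriv (Fpot \<kappa> CARD('n)) (sq z)"
  define h where "h = hf \<kappa> CARD('n) (sq z)"
  define h' where "h' = hdv \<kappa> CARD('n) (sq z)"
  define a where "a = F1 / (F + F1 * sq z)"
  define p where "p = 1/F"
  define q where "q = - a / F"
  have F0: "F > 0" using Fpot_pos[OF s assms(2), where N="CARD('n)"] by (simp add: F_def)
  have P: "sq z ^ CARD('n) + \<kappa> > 0" using s assms by (simp add: add_pos_pos)
  have S: "sq z ^ CARD('n) > 0" using s by simp
  have aeq: "a = - \<kappa> / (sq z * sq z ^ CARD('n))" using a_eq[OF s assms(2) Np] by (simp add: a_def F_def F1_def)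
  define K where "K \<mu> \<alpha> = invmetric \<kappa> z \<mu> \<alpha>" for \<mu> \<alpha>
  define \<tau> where "\<tau> \<mu> \<nu> = of_real h * (if \<mu> = \<nu> then 1 else 0) + of_real h' * cnj (z$\<mu>) * z$\<nu>" for \<mu> \<nu>
  have Kmu: "K \<mu> \<alpha> = of_real p * (if \<alpha> = \<mu> then 1 else 0) + of_real q * cnj (z$\<alpha>) * z$\<mu>" for \<mu> \<alpha>
    unfolding K_def invmetric_eq[OF assms] by (simp add: F_def F1_def a_def p_def q_def)
  have "norm2f \<kappa> (omegat \<kappa>) z = Re (\<Sum>\<mu>\<in>UNIV. \<Sum>\<nu>\<in>UNIV. \<Sum>\<alpha>\<in>UNIV. \<Sum>\<rho>\<in>UNIV.
       4 * (K \<mu> \<alpha> * K \<rho> \<nu> * \<tau> \<mu> \<nu> * cnj (\<tau> \<alpha> \<rho>)))"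
    unfolding norm2f_def omegat_comp[OF assms] K_def \<tau>_def h_def h'_def
    by (simp add: algebra_simps)
  also have "\<dots> = 4 * Re (\<Sum>\<mu>\<in>UNIV. \<Sum>\<nu>\<in>UNIV. \<Sum>\<alpha>\<in>UNIV. \<Sum>\<rho>\<in>UNIV.
       K \<mu> \<alpha> * K \<rho> \<nu> * \<tau> \<mu> \<nu> * cnj (\<tau> \<alpha> \<rho>))"
    by (simp add: sum_distrib_left[symmetric])
  also have "(\<Sum>\<mu>\<in>UNIV. \<Sum>\<nu>\<in>UNIV. \<Sum>\<alpha>\<in>UNIV. \<Sum>\<rho>\<in>UNIV. K \<mu> \<alpha> * K \<rho> \<nu> * \<tau> \<mu> \<nu> * cnj (\<tau> \<alpha> \<rho>))
     = (\<Sum>\<alpha>\<in>UNIV. \<Sum>\<rho>\<in>UNIV. (\<Sum>\<mu>\<in>UNIV. K \<mu> \<alpha> * (\<Sum>\<nu>\<in>UNIV. \<tau> \<mu> \<nu> * K \<rho> \<nu>)) * cnj (\<tau> \<alpha> \<rho>))"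
    by (rule sum4_reorder)
  also have "\<dots> = of_real ((p*(h*p))*h*real CARD('n) + (p*(h*p))*h' * sq z + (p*(h*q+h'*p+h'*q * sq z) + q*(h*p) + q*(h*q+h'*p+h'*q * sq z) * sq z)*h * sq z
     + (p*(h*q+h'*p+h'*q * sq z) + q*(h*p) + q*(h*q+h'*p+h'*q * sq z) * sq z)*h' * sq z * sq z)"
  proof -
    have A: "(\<Sum>\<nu>\<in>UNIV. \<tau> \<mu> \<nu> * K \<rho> \<nu>) = of_real (h*p) * (if \<mu> = \<rho> then 1 else 0)
        + of_real (h*q+h'*p+h'*q * sq z) * cnj (z$\<mu>) * z$\<rho>" for \<mu> \<rho>
      unfolding \<tau>_def Kmu
      by (subst sum_gp[where c="of_real h" and d="of_real h'" and x="\<lambda>i. cnj (z$i)" and y="\<lambda>k. z$k" and e="of_real p"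
          and f="of_real q" and x'="\<lambda>k. cnj (z$k)" and y'="\<lambda>j. z$j"]) (simp add: sum_zcz algebra_simps)
    have B: "(\<Sum>\<mu>\<in>UNIV. K \<mu> \<alpha> * (\<Sum>\<nu>\<in>UNIV. \<tau> \<mu> \<nu> * K \<rho> \<nu>))
      = of_real (p*(h*p)) * (if \<alpha> = \<rho> then 1 else 0)
        + of_real (p*(h*q+h'*p+h'*q * sq z) + q*(h*p) + q*(h*q+h'*p+h'*q * sq z) * sq z) * cnj (z$\<alpha>) * z$\<rho>" for \<alpha> \<rho>
      unfolding A unfolding Kmu
      by (subst sum_gp[where c="of_real p" and d="of_real q" and x="\<lambda>i. cnj (z$i)" and y="\<lambda>k. z$k" and e="of_real (h*p)"
          and f="of_real (h*q+h'*p+h'*q * sq z)" and x'="\<lambda>k. cnj (z$k)" and y'="\<lambda>j. z$j"]) (simp add: sum_zcz algebra_simps)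
    have C: "cnj (\<tau> \<alpha> \<rho>) = of_real h * (if \<alpha> = \<rho> then 1 else 0) + of_real h' * z$\<alpha> * cnj (z$\<rho>)" for \<alpha> \<rho>
      unfolding \<tau>_def by simp
    show ?thesis
      unfolding B C
      by (subst sum_ds[where p="of_real (p*(h*p))" and q="of_real (p*(h*q+h'*p+h'*q * sq z) + q*(h*p) + q*(h*q+h'*p+h'*q * sq z) * sq z)"
          and x="\<lambda>\<mu>. cnj (z$\<mu>)" and y="\<lambda>\<nu>. z$\<nu>"
          and r="of_real h" and t="of_real h'" and x'="\<lambda>\<mu>. z$\<mu>" and y'="\<lambda>\<nu>. cnj (z$\<nu>)"]) (simp add: sum_zcz sum_czz)
  qed
  also have "(p*(h*p))*h*real CARD('n) + (p*(h*p))*h' * sq z + (p*(h*q+h'*p+h'*q * sq z) + q*(h*p) + q*(h*q+h'*p+h'*q * sq z) * sq z)*h * sq z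
     + (p*(h*q+h'*p+h'*q * sq z) + q*(h*p) + q*(h*q+h'*p+h'*q * sq z) * sq z)*h' * sq z * sq z
     = real CARD('n) * (real CARD('n) - 1) / (sq z ^ CARD('n) + \<kappa>)^2"
    unfolding p_def q_def aeq h_def h'_def hf_eq[OF s assms(2) Np] hdv_def F_def[symmetric]
    using norm2_alg[OF F0 s S P, of \<kappa> "real CARD('n)"] by simp
  finally show ?thesis by simp
qed

lemma nn_integral_scale_euclid:
  fixes f :: "'a::euclidean_space \<Rightarrow> ennreal"
  assumes [measurable]: "f \<in> borel_measurable borel" and c: "c \<noteq> 0"
  shows "(\<integral>\<^sup>+ x. f x \<partial>lborel) = ennreal (\<bar>c\<bar> ^ DIM('a)) * (\<integral>\<^sup>+ x. f (c *\<^sub>R x) \<partial>lborel)"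
  by (subst lborel_affine[OF c, of 0]) (simp add: nn_integral_density nn_integral_distr nn_integral_cmult)

lemma nonint_origin:
  "(\<integral>\<^sup>+ x. indicator (ball 0 1 - {0}) x * ennreal (1 / norm x ^ DIM('a)) \<partial>(lborel::'a::euclidean_space measure)) = \<infinity>"
proof (rule ccontr)
  define d where "d = DIM('a)"
  define g :: "real \<Rightarrow> 'a \<Rightarrow> ennreal" where "g r x = indicator (ball 0 r - {0}) x * ennreal (1 / norm x ^ d)" for r x
  define J where "J r = (\<integral>\<^sup>+ x. g r x \<partial>lborel)" for r
  assume "(\<integral>\<^sup>+ x. indicator (ball 0 1 - {0}) x * ennreal (1 / norm x ^ DIM('a)) \<partial>(lborel::'a measure)) \<noteq> \<infinity>"
  then have fin: "J 1 \<noteq> \<infinity>" by (simp add: J_def g_def d_def)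
  have gm [measurable]: "g r \<in> borel_measurable borel" for r
  proof -
    have "ball 0 r - {0} \<in> sets (borel :: 'a measure)" by auto
    moreover have "(\<lambda>x::'a. 1 / norm x ^ d) \<in> borel_measurable borel"
      by (intro borel_measurable_divide borel_measurable_power borel_measurable_norm) auto
    ultimately show ?thesis unfolding g_def by measurable
  qed
  have "J 1 = ennreal (\<bar>2\<bar> ^ d) * (\<integral>\<^sup>+ x. g 1 (2 *\<^sub>R x) \<partial>lborel)"
    unfolding J_def d_def by (rule nn_integral_scale_euclid) auto
  also have "(\<lambda>x. g 1 (2 *\<^sub>R x)) = (\<lambda>x. ennreal (1 / 2 ^ d) * g (1/2) x)"
  proof
    fix x :: 'a
    show "g 1 (2 *\<^sub>R x) = ennreal (1 / 2 ^ d) * g (1/2) x"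
      by (auto simp: g_def indicator_def ennreal_mult'[symmetric] power_mult_distrib field_simps)
  qed
  also have "ennreal (\<bar>2\<bar> ^ d) * (\<integral>\<^sup>+ x. ennreal (1 / 2 ^ d) * g (1/2) x \<partial>lborel) = J (1/2)"
    by (simp add: nn_integral_cmult J_def mult.assoc[symmetric] ennreal_mult'[symmetric])
  finally have J12: "J 1 = J (1/2)" .
  have split: "g 1 x = g (1/2) x + indicator (ball 0 1 - ball 0 (1/2)) x * ennreal (1 / norm x ^ d)" for x :: 'a
    by (auto simp: g_def indicator_def)
  have "J 1 = J (1/2) + (\<integral>\<^sup>+ x. indicator (ball 0 1 - ball 0 (1/2)) x * ennreal (1 / norm x ^ d) \<partial>(lborel::'a measure))"
  proof -
    have m1: "ball 0 1 - ball 0 (1/2) \<in> sets (borel :: 'a measure)" by auto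
    have m2: "(\<lambda>x::'a. 1 / norm x ^ d) \<in> borel_measurable borel"
      by (intro borel_measurable_divide borel_measurable_power borel_measurable_norm) auto
    have m3: "(\<lambda>x::'a. indicator (ball 0 1 - ball 0 (1/2)) x * ennreal (1 / norm x ^ d)) \<in> borel_measurable lborel"
      using m1 m2 by measurable
    have m4: "g (1/2) \<in> borel_measurable lborel" using gm by simp
    show ?thesis unfolding J_def split by (rule nn_integral_add[OF m4 m3])
  qed
  moreover have "(\<integral>\<^sup>+ x. indicator (ball 0 1 - ball 0 (1/2)) x * ennreal (1 / norm x ^ d) \<partial>(lborel::'a measure))
      \<ge> (\<integral>\<^sup>+ x. indicator (ball 0 1 - ball 0 (1/2)) x \<partial>(lborel::'a measure))"
  proof (rule nn_integral_mono)
    fix x :: 'a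
    show "indicator (ball 0 1 - ball 0 (1/2)) x \<le> indicator (ball 0 1 - ball 0 (1/2)) x * ennreal (1 / norm x ^ d)"
    proof (cases "x \<in> ball 0 1 - ball 0 (1/2)")
      case True
      then have "norm x < 1" "norm x \<ge> 1/2" by auto
      then have "norm x ^ d \<le> 1" by (simp add: power_le_one)
      moreover have "norm x > 0" using \<open>norm x \<ge> 1/2\<close> by linarith
      then have "norm x ^ d > 0" by simp
      ultimately have "1 / norm x ^ d \<ge> 1" by simp
      then show ?thesis using True by (simp add: indicator_def)
    qed (auto simp: indicator_def)
  qed
  moreover have "(\<integral>\<^sup>+ x. indicator (ball 0 1 - ball 0 (1/2)) x \<partial>(lborel::'a measure)) > (0::ennreal)"
  proof -
    have "(\<integral>\<^sup>+ x. indicator (ball 0 1 - ball 0 (1/2)) x \<partial>(lborel::'a measure)) = emeasure lborel (ball (0::'a) 1 - ball 0 (1/2))"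
      by (simp add: nn_integral_indicator)
    also have "\<dots> = emeasure lborel (ball (0::'a) 1) - emeasure lborel (ball (0::'a) (1/2))"
      using emeasure_lborel_ball_finite[of "0::'a" "1/2"] by (intro emeasure_Diff) auto
    also have "\<dots> = ennreal (unit_ball_vol (real d)) - ennreal (unit_ball_vol (real d) * (1/2)^d)"
      by (simp add: emeasure_ball d_def)
    also have "\<dots> = ennreal (unit_ball_vol (real d) - unit_ball_vol (real d) * (1/2)^d)"
      by (rule ennreal_minus) simp
    also have "\<dots> > 0"
    proof -
      have d0: "d > 0" by (simp add: d_def)
      have "(1/2::real)^d < 1" using d0 by (simp add: power_less_one_iff)
      then have "unit_ball_vol (real d) * (1/2)^d < unit_ball_vol (real d)"
        by (simp add: mult_less_cancel_left1)
      then show ?thesis by simp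
    qed
    finally show ?thesis .
  qed
  ultimately have "\<exists>X Y. J 1 = J (1/2) + X \<and> X \<ge> Y \<and> Y > (0::ennreal)" by blast
  then obtain X Y where A: "J 1 = J (1/2) + X" and B: "X \<ge> Y" and C: "Y > (0::ennreal)" by blast
  have "J 1 + X = J 1 + 0" using A J12 by simp
  then have "X = 0" using fin by (simp only: ennreal_add_left_cancel) simp
  then show False using B C by simp
qed

lemma integrable_cauchy1: "integrable lborel (\<lambda>x::real. inverse (1 + x^2))"
proof -
  have "set_integrable lborel (einterval (-\<infinity>) \<infinity>) (\<lambda>x::real. inverse (1 + x^2))"
    by (rule integrable_inverse_1_plus_square)
  moreover have "einterval (-\<infinity>) \<infinity> = (UNIV :: real set)" by (auto simp: einterval_def)
  ultimately show ?thesis by (simp add: set_integrable_def)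
qed

lemma integrable_prod_cauchy:
  "integrable lborel (\<lambda>x::'a::euclidean_space. \<Prod>b\<in>Basis. inverse (1 + (x \<bullet> b)^2))"
proof (subst integrable_iff_bounded, intro conjI)
  show "(\<lambda>x::'a. \<Prod>b\<in>Basis. inverse (1 + (x \<bullet> b)^2)) \<in> borel_measurable lborel"
    by measurable
  have nn: "\<And>b x. 0 \<le> inverse (1 + (x::real)^2)" by (simp add: add_pos_nonneg)
  have "(\<integral>\<^sup>+ x. ennreal (norm (\<Prod>b\<in>Basis. inverse (1 + (x \<bullet> b)^2))) \<partial>(lborel::'a measure))
     = (\<integral>\<^sup>+ x. (\<Prod>b\<in>Basis. ennreal (inverse (1 + (x \<bullet> b)^2))) \<partial>(lborel::'a measure))"
    by (intro nn_integral_cong) (simp add: prod_nonneg nn prod_ennreal abs_prod)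
  also have "\<dots> = (\<Prod>b\<in>(Basis::'a set). (\<integral>\<^sup>+ x. ennreal (inverse (1 + x^2)) \<partial>lborel))"
    by (rule nn_integral_lborel_prod) auto
  also have "\<dots> < \<infinity>"
  proof -
    have "(\<integral>\<^sup>+ x. ennreal (norm (inverse (1 + (x::real)^2))) \<partial>lborel) < \<infinity>"
      using integrable_cauchy1 unfolding integrable_iff_bounded by blast
    then have f: "(\<integral>\<^sup>+ x. ennreal (inverse (1 + (x::real)^2)) \<partial>lborel) < \<infinity>"
      by (simp add: add_pos_nonneg)
    show ?thesis using f by (simp add: power_less_top_ennreal)
  qed
  finally show "(\<integral>\<^sup>+ x. ennreal (norm (\<Prod>b\<in>Basis. inverse (1 + (x \<bullet> b)^2))) \<partial>(lborel::'a measure)) < \<infinity>" .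
qed

lemma prod_le_pow:
  fixes x :: "'a::euclidean_space"
  shows "(\<Prod>b\<in>Basis. 1 + (x \<bullet> b)^2) \<le> (1 + norm x ^ 2) ^ DIM('a)"
proof -
  have "(\<Prod>b\<in>Basis. 1 + (x \<bullet> b)^2) \<le> (\<Prod>b\<in>(Basis::'a set). 1 + norm x ^ 2)"
  proof (rule prod_mono)
    fix b :: 'a assume b: "b \<in> Basis"
    have "\<bar>x \<bullet> b\<bar> \<le> norm x" using Basis_le_norm[OF b] .
    then have "(x \<bullet> b)^2 \<le> norm x ^ 2"
      by (metis abs_ge_zero power2_abs power_mono)
    then show "0 \<le> 1 + (x \<bullet> b)^2 \<and> 1 + (x \<bullet> b)^2 \<le> 1 + norm x ^ 2" by (simp add: add_nonneg_nonneg)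
  qed
  then show ?thesis by simp
qed

lemma integrable_decay:
  fixes f :: "'a::euclidean_space \<Rightarrow> real"
  assumes [measurable]: "f \<in> borel_measurable lborel"
    and bd: "\<And>x. \<bar>f x\<bar> \<le> C / (1 + norm x ^ 2) ^ DIM('a)"
  shows "integrable lborel f"
proof (rule Bochner_Integration.integrable_bound)
  show "integrable lborel (\<lambda>x::'a. C * (\<Prod>b\<in>Basis. inverse (1 + (x \<bullet> b)^2)))"
    by (intro integrable_mult_right integrable_prod_cauchy)
  show "f \<in> borel_measurable lborel" by simp
  show "AE x in lborel. norm (f x) \<le> norm (C * (\<Prod>b\<in>Basis. inverse (1 + (x \<bullet> b)^2)))"
  proof (intro AE_I2)
    fix x :: 'a
    have "0 \<le> C / (1 + norm x ^ 2) ^ DIM('a)" using bd[of x] abs_ge_zero order_trans by blast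
    moreover have "(1 + norm x ^ 2) ^ DIM('a) > 0" by (simp add: add_pos_nonneg)
    ultimately have C0: "C \<ge> 0" by (simp add: zero_le_divide_iff)
    have pp: "(\<Prod>b\<in>(Basis::'a set). 1 + (x \<bullet> b)^2) > 0" by (intro prod_pos) (simp add: add_pos_nonneg)
    have "C / (1 + norm x ^ 2) ^ DIM('a) \<le> C / (\<Prod>b\<in>Basis. 1 + (x \<bullet> b)^2)"
      using prod_le_pow[of x] pp C0 by (intro divide_left_mono) auto
    also have "\<dots> = C * (\<Prod>b\<in>Basis. inverse (1 + (x \<bullet> b)^2))"
      by (simp add: prod_inversef[symmetric] divide_inverse)
    also have "\<dots> = norm (C * (\<Prod>b\<in>Basis. inverse (1 + (x \<bullet> b)^2)))"
      using C0 by (simp add: abs_mult prod_nonneg add_pos_nonneg abs_prod)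
    finally show "norm (f x) \<le> norm (C * (\<Prod>b\<in>Basis. inverse (1 + (x \<bullet> b)^2)))"
      using bd[of x] by simp
  qed
qed

lemma pow_bound:
  fixes s \<kappa> :: real
  assumes "s \<ge> 0" "\<kappa> > 0"
  shows "(1 + s)^N \<le> 2^N * (1 + 1/\<kappa>) * (s^N + \<kappa>)"
proof -
  have a: "(1 + s)^N \<le> 2^N * (1 + s^N)"
  proof (cases "s \<le> 1")
    case True
    have "(1 + s)^N \<le> 2^N" using True assms by (intro power_mono) auto
    also have "\<dots> \<le> 2^N * (1 + s^N)" using assms by simp
    finally show ?thesis .
  next
    case False
    have "(1 + s)^N \<le> (2 * s)^N" using False assms by (intro power_mono) auto
    also have "\<dots> = 2^N * s^N" by (simp add: power_mult_distrib)
    also have "\<dots> \<le> 2^N * (1 + s^N)" by simp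
    finally show ?thesis .
  qed
  have b: "1 + s^N \<le> (1 + 1/\<kappa>) * (s^N + \<kappa>)"
  proof -
    have "(1 + 1/\<kappa>) * (s^N + \<kappa>) = 1 + s^N + (\<kappa> + s^N/\<kappa>)"
      using assms by (simp add: field_simps)
    moreover have "\<kappa> + s^N/\<kappa> \<ge> 0" using assms by simp
    ultimately show ?thesis by simp
  qed
  have "2^N * (1 + s^N) \<le> 2^N * ((1 + 1/\<kappa>) * (s^N + \<kappa>))"
    using b by (intro mult_left_mono) auto
  with a have "(1 + s)^N \<le> 2^N * ((1 + 1/\<kappa>) * (s^N + \<kappa>))" by (rule order_trans)
  then show ?thesis by (simp add: mult.assoc)
qed

lemma part3:
  fixes \<kappa> :: real
  assumes "\<kappa> > 0"
  shows "sq_integrable \<kappa> (\<lambda>z::complex^'n::finite. norm2f \<kappa> (omegat \<kappa>) z)"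
proof -
  define N where "N = CARD('n)"
  define \<Phi> where "\<Phi> z = 4 * (real N * (real N - 1) / (sq z ^ N + \<kappa>)^2)" for z :: "complex^'n"
  have eq: "(\<lambda>x. indicator (-{0}) x *\<^sub>R (norm2f \<kappa> (omegat \<kappa>) x * vol \<kappa> x))
      = (\<lambda>x::complex^'n. indicator (-{0}) x *\<^sub>R \<Phi> x)"
  proof
    fix x :: "complex^'n"
    show "indicator (-{0}) x *\<^sub>R (norm2f \<kappa> (omegat \<kappa>) x * vol \<kappa> x) = indicator (-{0}) x *\<^sub>R \<Phi> x"
      by (cases "x = 0") (simp_all add: norm2f_eq[OF _ assms] vol_eq[OF _ assms] \<Phi>_def N_def)
  qed
  have "integrable lborel (\<lambda>x::complex^'n. indicator (-{0}) x *\<^sub>R \<Phi> x)"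
  proof (rule integrable_decay)
    have "(\<lambda>x::complex^'n. \<Phi> x) \<in> borel_measurable lborel"
      unfolding \<Phi>_def sq_norm by measurable
    moreover have "(-{0}::(complex^'n) set) \<in> sets lborel" by auto
    ultimately show "(\<lambda>x::complex^'n. indicator (-{0}) x *\<^sub>R \<Phi> x) \<in> borel_measurable lborel"
      by measurable
    define C0 where "C0 = (2^N * (1 + 1/\<kappa>))^2"
    fix x :: "complex^'n"
    have s0: "sq x \<ge> 0" by (rule sq_nonneg)
    have P: "sq x ^ N + \<kappa> > 0" using zero_le_power[OF s0, of N] assms by linarith
    have "((1 + sq x)^N)^2 \<le> (2^N * (1 + 1/\<kappa>) * (sq x ^ N + \<kappa>))^2"
      using pow_bound[OF s0 assms, of N] s0 by (intro power_mono) auto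
    also have "\<dots> = C0 * (sq x ^ N + \<kappa>)^2" by (simp add: C0_def power_mult_distrib)
    finally have le: "((1 + sq x)^N)^2 \<le> C0 * (sq x ^ N + \<kappa>)^2" .
    have Nn: "real N * (real N - 1) \<ge> 0" by (simp add: N_def)
    have "\<Phi> x \<ge> 0" using Nn P by (simp add: \<Phi>_def)
    then have "\<bar>indicator (-{0}) x *\<^sub>R \<Phi> x\<bar> \<le> \<Phi> x" by (cases "x = 0") (simp_all add: indicator_def)
    also have "\<Phi> x \<le> (4 * (real N * (real N - 1)) * C0) / ((1 + sq x)^N)^2"
    proof -
      have pos: "((1 + sq x)^N)^2 > 0" using s0 by simp
      have "\<Phi> x = 4 * (real N * (real N - 1)) / (sq x ^ N + \<kappa>)^2" by (simp add: \<Phi>_def)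
      also have "\<dots> \<le> 4 * (real N * (real N - 1)) * C0 / ((1 + sq x)^N)^2"
      proof -
        have gen: "a / B \<le> a * C0 / A" if "0 \<le> a" "A \<le> C0 * B" "0 < A" "0 < B" for a A B :: real
        proof -
          have "a * A \<le> a * (C0 * B)" using that by (intro mult_left_mono) auto
          then show ?thesis using that by (simp add: divide_simps mult.assoc)
        qed
        show ?thesis by (rule gen) (use Nn le pos P in auto)
      qed
      finally show ?thesis .
    qed
    also have "((1 + sq x)^N)^2 = (1 + norm x ^ 2) ^ DIM(complex^'n)"
      by (simp add: sq_norm N_def power_mult[symmetric] mult.commute)
    finally show "\<bar>indicator (-{0}) x *\<^sub>R \<Phi> x\<bar> \<le> (4 * (real N * (real N - 1)) * C0) / (1 + norm x ^ 2) ^ DIM(complex^'n)" .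
  qed
  then show ?thesis unfolding sq_integrable_def set_integrable_def eq .
qed

lemma Psi_lower:
  fixes z :: "complex^'n::finite"
  assumes "z \<noteq> 0" "\<kappa> > 0" "sq z \<le> 1"
  shows "root CARD('n) \<kappa> / (1 + \<kappa>) / sq z ^ CARD('n)
     \<le> Fpot \<kappa> CARD('n) (sq z) * sq z / ((sq z ^ CARD('n) + \<kappa>) * sq z ^ CARD('n))"
proof -
  define N where "N = CARD('n)"
  define s where "s = sq z"
  define F where "F = Fpot \<kappa> N s"
  define r where "r = root N \<kappa>"
  have Np: "N > 0" by (simp add: N_def)
  have s: "s > 0" using sq_pos assms by (auto simp: s_def)
  have F0: "F > 0" using Fpot_pos[OF s assms(2)] by (simp add: F_def)
  have S: "s^N > 0" using s by simp
  have S1: "s^N \<le> 1" using s assms(3) by (simp add: s_def power_le_one)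
  have P: "s^N + \<kappa> > 0" using S assms by simp
  have r0: "r > 0" using Np assms by (simp add: r_def real_root_gt_zero)
  have FN: "(F * s)^N = s^N + \<kappa>"
  proof -
    have "(F * s)^N = F^N * s^N" by (simp add: power_mult_distrib)
    also have "\<dots> = s^N + \<kappa>" using Fpot_pow[OF s assms(2) Np] S s by (simp add: F_def)
    finally show ?thesis .
  qed
  have Fs: "F * s \<ge> r"
  proof (rule ccontr)
    assume "\<not> F * s \<ge> r"
    then have "F * s < r" by simp
    then have "(F * s)^N < r^N" using F0 s Np by (intro power_strict_mono) auto
    also have "r^N = \<kappa>" using Np assms by (simp add: r_def)
    finally show False using FN S by linarith
  qed
  have "r / (1 + \<kappa>) / s^N = r / ((1 + \<kappa>) * s^N)" by simp
  also have "\<dots> \<le> r / ((s^N + \<kappa>) * s^N)"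
    using S1 S P r0 by (intro divide_left_mono mult_right_mono mult_pos_pos) auto
  also have "\<dots> \<le> F * s / ((s^N + \<kappa>) * s^N)"
    using Fs P S by (intro divide_right_mono) auto
  finally show ?thesis by (simp add: N_def s_def F_def r_def)
qed

lemma part4:
  fixes \<kappa> :: real
  assumes "\<kappa> > 0"
  shows "\<not> sq_integrable \<kappa> (\<lambda>z::complex^'n::finite. norm01 \<kappa> (beta \<kappa>) z)"
proof
  define N where "N = CARD('n)"
  define f where "f x = indicator (-{0}) x *\<^sub>R (norm01 \<kappa> (beta \<kappa>) x * vol \<kappa> x)" for x :: "complex^'n"
  define c where "c = root N \<kappa> / (1 + \<kappa>)"
  define g where "g x = indicator (ball 0 1 - {0}) x * ennreal (1 / norm x ^ DIM(complex^'n))" for x :: "complex^'n"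
  assume "sq_integrable \<kappa> (\<lambda>z::complex^'n. norm01 \<kappa> (beta \<kappa>) z)"
  then have "integrable lborel f" unfolding sq_integrable_def set_integrable_def f_def .
  then have fin: "(\<integral>\<^sup>+ x. ennreal (norm (f x)) \<partial>lborel) < \<infinity>" unfolding integrable_iff_bounded by blast
  have c0: "c > 0" using assms by (simp add: c_def N_def real_root_gt_zero)
  have gm: "g \<in> borel_measurable lborel"
  proof -
    have "ball 0 1 - {0} \<in> sets (borel :: (complex^'n) measure)" by auto
    moreover have "(\<lambda>x::complex^'n. 1 / norm x ^ DIM(complex^'n)) \<in> borel_measurable borel"
      by (intro borel_measurable_divide borel_measurable_power borel_measurable_norm) auto
    ultimately show ?thesis unfolding g_def by measurable
  qed
  have lb: "ennreal c * g x \<le> ennreal (norm (f x))" for x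
  proof (cases "x \<in> ball 0 1 - {0}")
    case True
    then have x0: "x \<noteq> 0" and x1: "norm x < 1" by auto
    have sq1: "sq x \<le> 1" using x1 by (simp add: sq_norm power_le_one)
    have fx: "f x = Fpot \<kappa> CARD('n) (sq x) * sq x / ((sq x ^ CARD('n) + \<kappa>) * sq x ^ CARD('n))"
      using x0 by (simp add: f_def norm01_eq[OF x0 assms] vol_eq[OF x0 assms])
    have nx: "norm x ^ DIM(complex^'n) = sq x ^ CARD('n)"
      by (simp add: sq_norm power_mult[symmetric] mult.commute)
    have "c / sq x ^ CARD('n) \<le> f x"
      using Psi_lower[OF x0 assms sq1] unfolding fx c_def N_def .
    moreover have "c / sq x ^ CARD('n) \<ge> 0" using c0 sq_nonneg[of x] by simp
    ultimately have "c / sq x ^ CARD('n) \<le> norm (f x)" by simp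
    then have "ennreal (c / sq x ^ CARD('n)) \<le> ennreal (norm (f x))" by (rule ennreal_leI)
    moreover have "ennreal c * g x = ennreal (c / sq x ^ CARD('n))"
    proof -
      have nx2: "norm x ^ (CARD('n) * 2) = sq x ^ CARD('n)" using nx by simp
      show ?thesis using True c0 by (simp add: g_def nx2 ennreal_mult'[symmetric] divide_inverse)
    qed
    ultimately show ?thesis by simp
  qed (simp add: g_def)
  have "(\<integral>\<^sup>+ x. ennreal c * g x \<partial>lborel) \<le> (\<integral>\<^sup>+ x. ennreal (norm (f x)) \<partial>lborel)"
    by (rule nn_integral_mono) (rule lb)
  moreover have "(\<integral>\<^sup>+ x. ennreal c * g x \<partial>lborel) = ennreal c * (\<integral>\<^sup>+ x. g x \<partial>lborel)"
    by (rule nn_integral_cmult[OF gm])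
  moreover have "(\<integral>\<^sup>+ x. g x \<partial>lborel) = \<infinity>"
    unfolding g_def by (rule nonint_origin)
  ultimately have "ennreal c * \<infinity> < \<infinity>" using fin by simp
  then show False using c0 by (simp add: ennreal_mult_top)
qed

theorem mainTheorem3:
  fixes \<kappa> :: real
  assumes "CARD('n::finite) \<ge> 2" and "\<kappa> > 0"
  shows "(\<forall>z::complex^'n. z \<noteq> 0 \<longrightarrow> (\<forall>\<mu> \<nu>. dbar01 (beta \<kappa>) \<mu> \<nu> z = 0))
    \<and> (\<forall>z::complex^'n. z \<noteq> 0 \<longrightarrow>
          (\<Sum>\<mu>\<in>UNIV. \<Sum>\<nu>\<in>UNIV. invmetric \<kappa> z \<mu> \<nu> * dz \<mu> (beta \<kappa> \<nu>) z) = 0)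
    \<and> sq_integrable \<kappa> (\<lambda>z::complex^'n. norm2f \<kappa> (omegat \<kappa>) z)
    \<and> \<not> sq_integrable \<kappa> (\<lambda>z::complex^'n. norm01 \<kappa> (beta \<kappa>) z)
    \<and> (\<forall>z::complex^'n. z \<noteq> 0 \<longrightarrow> (\<forall>k \<mu> \<nu>.
          omega \<kappa> k \<mu> \<nu> z - of_real \<kappa> * omegat \<kappa> k \<mu> \<nu> z = 2 * d1 (flat \<kappa> xi) k \<mu> \<nu> z))"
  using part1[OF _ assms(2)] part2[OF _ assms(2)] part3[OF assms(2)] part4[OF assms(2)] part5[OF _ assms(2)]
  by blast

end
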